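(* Let $\Bbbk$ be a field, $S=\Bbbk[x,y,z]$, and let $I\subset S$ be a monomial ideal generated in degree $d$. Then $I$ has a $d$-linear resolution if and only if the graph $G_I(u,v)$ is connected for all $u,v\in\mathcal G(I)$ and $I$ has no bad configuration in $\Delta(d)$.
   Context: $\mathcal G(I)$ is the minimal monomial generating set of $I$. $I$ has a $d$-linear resolution if $\beta_{i,i+j}(I)=0$ for all $i\ge 0$ and $j\neq d$. The dual graph $G_I$ has vertex set $\mathcal G(I)$, and $\{f,g\}$ is an edge iff $\deg\operatorname{lcm}(f,g)=\deg f+1=\deg g+1$. For $f,g\in\mathcal G(I)$, $G_I(f,g)$ is the induced subgraph of $G_I$ on $\{h\in\mathcal G(I): h \text{ divides } \operatorname{lcm}(f,g)\}$. $\Delta(d)$ is the dual graph of $(x,y,z)^d$. For a monomial $f$, its $d$-shadow is the set of degree-$d$ monomials dividing $f$. $I$ has a bad configuration in $\Delta(d)$ if there exists a nonempty set $M$ of degree-$d$ monomials not in $I$ such that $M$ is the $d$-shadow of some monomial $f\in S$ and each of the $d$-shadows of $fx,fy,fz$ meets $\mathcal G(I)$. *)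

theory Defs
  imports Main
begin

text \<open>Monomials of S = k[x,y,z] are represented by exponent triples (a,b,c) for x^a y^b z^c.
  A monomial ideal I is represented by the set of monomials it contains (an upward closed set
  w.r.t. divisibility); I is the k-span of these monomials.\<close>

type_synonym mono = "nat \<times> nat \<times> nat"

fun mdeg :: "mono \<Rightarrow> nat" where
  "mdeg (a, b, c) = a + b + c"

fun mdvd :: "mono \<Rightarrow> mono \<Rightarrow> bool" where
  "mdvd (a, b, c) (a', b', c') \<longleftrightarrow> a \<le> a' \<and> b \<le> b' \<and> c \<le> c'"

fun mlcm :: "mono \<Rightarrow> mono \<Rightarrow> mono" where
  "mlcm (a, b, c) (a', b', c') = (max a a', max b b', max c c')"

fun mexp :: "mono \<Rightarrow> nat \<Rightarrow> nat" where
  "mexp (a, b, c) j = (if j = 0 then a else if j = 1 then b else if j = 2 then c else 0)"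

definition mx :: "mono \<Rightarrow> mono" where "mx m = (case m of (a, b, c) \<Rightarrow> (Suc a, b, c))"
definition my :: "mono \<Rightarrow> mono" where "my m = (case m of (a, b, c) \<Rightarrow> (a, Suc b, c))"
definition mz :: "mono \<Rightarrow> mono" where "mz m = (case m of (a, b, c) \<Rightarrow> (a, b, Suc c))"

definition monomial_ideal :: "mono set \<Rightarrow> bool" where
  "monomial_ideal I \<longleftrightarrow> (\<forall>m\<in>I. \<forall>m'. mdvd m m' \<longrightarrow> m' \<in> I)"

definition mingens :: "mono set \<Rightarrow> mono set" where
  "mingens I = {m \<in> I. \<forall>m'\<in>I. mdvd m' m \<longrightarrow> m' = m}"

definition generated_in_degree :: "mono set \<Rightarrow> nat \<Rightarrow> bool" where
  "generated_in_degree I d \<longleftrightarrow> (\<forall>g\<in>mingens I. mdeg g = d)"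

text \<open>Tor_i(k,I)_\<alpha> = H_i(K(x,y,z) \<otimes> I)_\<alpha>. The multidegree-\<alpha> part of
  K_i \<otimes> I has k-basis the e_F with F \<subseteq> {0,1,2}, card F = i, \<alpha> - e_F \<ge> 0
  and x^(\<alpha> - e_F) \<in> I.\<close>

definition mono_minus_set :: "mono \<Rightarrow> nat set \<Rightarrow> mono" where
  "mono_minus_set \<alpha> F =
     (mexp \<alpha> 0 - (if 0 \<in> F then 1 else 0),
      mexp \<alpha> 1 - (if 1 \<in> F then 1 else 0),
      mexp \<alpha> 2 - (if 2 \<in> F then 1 else 0))"

definition kbasis :: "mono set \<Rightarrow> mono \<Rightarrow> nat \<Rightarrow> nat set set" where
  "kbasis I \<alpha> i = {F. F \<subseteq> {0, 1, 2} \<and> card F = i \<and> (\<forall>j\<in>F. 1 \<le> mexp \<alpha> j)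
                     \<and> mono_minus_set \<alpha> F \<in> I}"

definition kchain :: "mono set \<Rightarrow> mono \<Rightarrow> nat \<Rightarrow> (nat set \<Rightarrow> 'k::field) \<Rightarrow> bool" where
  "kchain I \<alpha> i c \<longleftrightarrow> (\<forall>F. F \<notin> kbasis I \<alpha> i \<longrightarrow> c F = 0)"

text \<open>Koszul sign: d(e_F) = \<Sum>_{j\<in>F} (-1)^{#\<lbrace>l\<in>F. l<j\<rbrace>} x_j e_{F-{j}}.\<close>
definition ksign :: "nat \<Rightarrow> nat set \<Rightarrow> 'k::field" where
  "ksign j F = (-1) ^ card {l \<in> F. l < j}"

definition kdiff :: "(nat set \<Rightarrow> 'k::field) \<Rightarrow> (nat set \<Rightarrow> 'k)" where
  "kdiff c G = (if G \<subseteq> {0, 1, 2}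
                then (\<Sum>j\<in>{0, 1, 2} - G. ksign j (insert j G) * c (insert j G))
                else 0)"

definition tor_vanishes :: "'k::field itself \<Rightarrow> mono set \<Rightarrow> nat \<Rightarrow> mono \<Rightarrow> bool" where
  "tor_vanishes _ I i \<alpha> \<longleftrightarrow>
     (\<forall>c :: nat set \<Rightarrow> 'k. kchain I \<alpha> i c \<and> kdiff c = (\<lambda>_. 0) \<longrightarrow>
        (\<exists>b. kchain I \<alpha> (Suc i) b \<and> kdiff b = c))"

text \<open>\<beta>_{i,j}(I) = dim_k Tor_i(k,I)_j = 0.\<close>
definition betti_zero :: "'k::field itself \<Rightarrow> mono set \<Rightarrow> nat \<Rightarrow> nat \<Rightarrow> bool" where
  "betti_zero k I i j \<longleftrightarrow> (\<forall>\<alpha>. mdeg \<alpha> = j \<longrightarrow> tor_vanishes k I i \<alpha>)"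

definition has_linear_resolution :: "'k::field itself \<Rightarrow> mono set \<Rightarrow> nat \<Rightarrow> bool" where
  "has_linear_resolution k I d \<longleftrightarrow> (\<forall>i j. j \<noteq> d \<longrightarrow> betti_zero k I i (i + j))"

definition dual_edge :: "mono \<Rightarrow> mono \<Rightarrow> bool" where
  "dual_edge f g \<longleftrightarrow> mdeg (mlcm f g) = mdeg f + 1 \<and> mdeg (mlcm f g) = mdeg g + 1"

definition graph_connected :: "'a set \<Rightarrow> ('a \<Rightarrow> 'a \<Rightarrow> bool) \<Rightarrow> bool" where
  "graph_connected V E \<longleftrightarrow>
     (\<forall>a\<in>V. \<forall>b\<in>V. (\<lambda>x y. x \<in> V \<and> y \<in> V \<and> E x y)\<^sup>*\<^sup>* a b)"

definition dual_sub_vertices :: "mono set \<Rightarrow> mono \<Rightarrow> mono \<Rightarrow> mono set" where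
  "dual_sub_vertices I f g = {h \<in> mingens I. mdvd h (mlcm f g)}"

definition GI_connected :: "mono set \<Rightarrow> mono \<Rightarrow> mono \<Rightarrow> bool" where
  "GI_connected I f g \<longleftrightarrow> graph_connected (dual_sub_vertices I f g) dual_edge"

definition shadow :: "nat \<Rightarrow> mono \<Rightarrow> mono set" where
  "shadow d f = {m. mdeg m = d \<and> mdvd m f}"

definition bad_configuration :: "mono set \<Rightarrow> nat \<Rightarrow> bool" where
  "bad_configuration I d \<longleftrightarrow>
     (\<exists>M f. M \<noteq> {} \<and> (\<forall>m\<in>M. mdeg m = d \<and> m \<notin> I) \<and> M = shadow d f
        \<and> shadow d (mx f) \<inter> mingens I \<noteq> {}
        \<and> shadow d (my f) \<inter> mingens I \<noteq> {}
        \<and> shadow d (mz f) \<inter> mingens I \<noteq> {})"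

end

theory Submission
  imports Defs
begin

lemma ks_gen: "ksign j F = (if even (card {l\<in>F. l < j}) then 1 else -1)"
  by (simp add: ksign_def)
lemma cs: "card {l\<in>{0,1::nat}. l < 1} = 1" "card {l\<in>{0,1::nat}. l < 0} = 0"
  "card {l\<in>{0,2::nat}. l < 2} = 1" "card {l\<in>{0,2::nat}. l < 0} = 0"
  "card {l\<in>{1,2::nat}. l < 2} = 1" "card {l\<in>{1,2::nat}. l < 1} = 0"
  "card {l\<in>{0,1,2::nat}. l < 0} = 0" "card {l\<in>{0,1,2::nat}. l < 1} = 1"
  "card {l\<in>{0,1,2::nat}. l < 2} = 2" "card {l\<in>{j::nat}. l < j} = 0"
proof -
  have "{l\<in>{0,1::nat}. l < 1} = {0}" by auto thus "card {l\<in>{0,1::nat}. l < 1} = 1" by simp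
  have "{l\<in>{0,1::nat}. l < 0} = {}" by auto thus "card {l\<in>{0,1::nat}. l < 0} = 0" by simp
  have "{l\<in>{0,2::nat}. l < 2} = {0}" by auto thus "card {l\<in>{0,2::nat}. l < 2} = 1" by simp
  have "{l\<in>{0,2::nat}. l < 0} = {}" by auto thus "card {l\<in>{0,2::nat}. l < 0} = 0" by simp
  have "{l\<in>{1,2::nat}. l < 2} = {1}" by auto thus "card {l\<in>{1,2::nat}. l < 2} = 1" by simp
  have "{l\<in>{1,2::nat}. l < 1} = {}" by auto thus "card {l\<in>{1,2::nat}. l < 1} = 0" by simp
  have "{l\<in>{0,1,2::nat}. l < 0} = {}" by auto thus "card {l\<in>{0,1,2::nat}. l < 0} = 0" by simp
  have "{l\<in>{0,1,2::nat}. l < 1} = {0}" by auto thus "card {l\<in>{0,1,2::nat}. l < 1} = 1" by simp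
  have "{l\<in>{0,1,2::nat}. l < 2} = {0,1}" by auto thus "card {l\<in>{0,1,2::nat}. l < 2} = 2" by simp
  have "{l\<in>{j::nat}. l < j} = {}" by auto thus "card {l\<in>{j::nat}. l < j} = 0" by simp
qed

lemma ksv: "ksign 1 {0,1::nat} = (-1::'k::field)" "ksign 0 {0,1::nat} = (1::'k::field)"
  "ksign 2 {0,2::nat} = (-1::'k::field)" "ksign 0 {0,2::nat} = (1::'k::field)"
  "ksign 2 {1,2::nat} = (-1::'k::field)" "ksign 1 {1,2::nat} = (1::'k::field)"
  "ksign 0 {0,1,2::nat} = (1::'k::field)" "ksign 1 {0,1,2::nat} = (-1::'k::field)"
  "ksign 2 {0,1,2::nat} = (1::'k::field)"
  "ksign 0 {0::nat} = (1::'k::field)" "ksign 1 {1::nat} = (1::'k::field)" "ksign 2 {2::nat} = (1::'k::field)"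
  by (simp_all only: ksign_def cs) simp_all

lemma sum3: "sum f {0,1,2::nat} = f 0 + f 1 + f 2" by (simp add: add.assoc)
lemma sum1: "sum f {a} = f a" by simp
lemma sum2: "a \<noteq> b \<Longrightarrow> sum f {a,b} = f a + f b" by simp

lemma kd:
  fixes c :: "nat set \<Rightarrow> 'k::field"
  shows "kdiff c {} = c {0} + c {1} + c {2}"
  "kdiff c {0} = - c {0,1} - c {0,2}"
  "kdiff c {1} = c {0,1} - c {1,2}"
  "kdiff c {2} = c {0,2} + c {1,2}"
  "kdiff c {0,1} = c {0,1,2}"
  "kdiff c {0,2} = - c {0,1,2}"
  "kdiff c {1,2} = c {0,1,2}"
  "kdiff c {0,1,2} = 0"
  "\<not> G \<subseteq> {0,1,2} \<Longrightarrow> kdiff c G = 0"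
proof -
  have d0: "{0,1,2::nat} - {} = {0,1,2}" "{0,1,2::nat} - {0} = {1,2}" "{0,1,2::nat} - {1} = {0,2}"
   "{0,1,2::nat} - {2} = {0,1}" "{0,1,2::nat} - {0,1} = {2}" "{0,1,2::nat} - {0,2} = {1}"
   "{0,1,2::nat} - {1,2} = {0}" "{0,1,2::nat} - {0,1,2} = {}" by auto
  have i: "insert 1 {0::nat} = {0,1}" "insert 2 {0::nat} = {0,2}" "insert 2 {1::nat} = {1,2}"
    "insert 1 {0,2::nat} = {0,1,2}" "insert (2::nat) {0,1} = {0,1,2}"
    by auto
  have ss: "{} \<subseteq> {0,1,2::nat}" "{0} \<subseteq> {0,1,2::nat}" "{1} \<subseteq> {0,1,2::nat}"
    "{2} \<subseteq> {0,1,2::nat}" "{0,1} \<subseteq> {0,1,2::nat}" "{0,2} \<subseteq> {0,1,2::nat}"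
    "{1,2} \<subseteq> {0,1,2::nat}" "{0,1,2} \<subseteq> {0,1,2::nat}" by auto
  have n: "(0::nat) \<noteq> 1" "(0::nat) \<noteq> 2" "(1::nat) \<noteq> 2" by auto
  show "kdiff c {} = c {0} + c {1} + c {2}"
    by (simp only: kdiff_def d0 ss if_True sum3 i ksv mult_1_left)
  show "kdiff c {0} = - c {0,1} - c {0,2}"
    by (simp only: kdiff_def d0 ss if_True sum2[OF n(3)] i ksv) simp
  show "kdiff c {1} = c {0,1} - c {1,2}"
    by (simp only: kdiff_def d0 ss if_True sum2[OF n(2)] i ksv) simp
  show "kdiff c {2} = c {0,2} + c {1,2}"
    by (simp only: kdiff_def d0 ss if_True sum2[OF n(1)] i ksv) simp
  show "kdiff c {0,1} = c {0,1,2}"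
    by (simp only: kdiff_def d0 ss if_True sum1 i ksv) simp
  show "kdiff c {0,2} = - c {0,1,2}"
    by (simp only: kdiff_def d0 ss if_True sum1 i ksv) simp
  show "kdiff c {1,2} = c {0,1,2}"
    by (simp only: kdiff_def d0 ss if_True sum1 i ksv) simp
  show "kdiff c {0,1,2} = 0"
    by (simp only: kdiff_def d0 ss if_True) simp
  show "\<not> G \<subseteq> {0,1,2} \<Longrightarrow> kdiff c G = 0"
    by (simp add: kdiff_def)
qed

lemma sub012: "(F::nat set) \<subseteq> {0,1,2} \<Longrightarrow> F = {} \<or> F = {0} \<or> F = {1} \<or> F = {2} \<or> F = {0,1} \<or> F = {0,2} \<or> F = {1,2} \<or> F = {0,1,2}"
  by (smt (verit) insert_commute subset_insert_iff subset_empty insert_Diff_single insert_absorb)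

lemma neqI1: "x \<in> A \<Longrightarrow> x \<notin> B \<Longrightarrow> A \<noteq> B" by blast
lemma neqI2: "x \<notin> A \<Longrightarrow> x \<in> B \<Longrightarrow> A \<noteq> B" by blast
lemma setneq: "({}::nat set) \<noteq> {0}"
  "({}::nat set) \<noteq> {1}"
  "({}::nat set) \<noteq> {Suc 0}"
  "({}::nat set) \<noteq> {2}"
  "({}::nat set) \<noteq> {0,1}"
  "({}::nat set) \<noteq> {0,Suc 0}"
  "({}::nat set) \<noteq> {0,2}"
  "({}::nat set) \<noteq> {1,2}"
  "({}::nat set) \<noteq> {Suc 0,2}"
  "({}::nat set) \<noteq> {0,1,2}"
  "({}::nat set) \<noteq> {0,Suc 0,2}"
  "({0}::nat set) \<noteq> {}"
  "({0}::nat set) \<noteq> {1}"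
  "({0}::nat set) \<noteq> {Suc 0}"
  "({0}::nat set) \<noteq> {2}"
  "({0}::nat set) \<noteq> {0,1}"
  "({0}::nat set) \<noteq> {0,Suc 0}"
  "({0}::nat set) \<noteq> {0,2}"
  "({0}::nat set) \<noteq> {1,2}"
  "({0}::nat set) \<noteq> {Suc 0,2}"
  "({0}::nat set) \<noteq> {0,1,2}"
  "({0}::nat set) \<noteq> {0,Suc 0,2}"
  "({1}::nat set) \<noteq> {}"
  "({Suc 0}::nat set) \<noteq> {}"
  "({1}::nat set) \<noteq> {0}"
  "({Suc 0}::nat set) \<noteq> {0}"
  "({1}::nat set) \<noteq> {2}"
  "({Suc 0}::nat set) \<noteq> {2}"
  "({1}::nat set) \<noteq> {0,1}"
  "({Suc 0}::nat set) \<noteq> {0,Suc 0}"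
  "({1}::nat set) \<noteq> {0,2}"
  "({Suc 0}::nat set) \<noteq> {0,2}"
  "({1}::nat set) \<noteq> {1,2}"
  "({Suc 0}::nat set) \<noteq> {Suc 0,2}"
  "({1}::nat set) \<noteq> {0,1,2}"
  "({Suc 0}::nat set) \<noteq> {0,Suc 0,2}"
  "({2}::nat set) \<noteq> {}"
  "({2}::nat set) \<noteq> {0}"
  "({2}::nat set) \<noteq> {1}"
  "({2}::nat set) \<noteq> {Suc 0}"
  "({2}::nat set) \<noteq> {0,1}"
  "({2}::nat set) \<noteq> {0,Suc 0}"
  "({2}::nat set) \<noteq> {0,2}"
  "({2}::nat set) \<noteq> {1,2}"
  "({2}::nat set) \<noteq> {Suc 0,2}"
  "({2}::nat set) \<noteq> {0,1,2}"
  "({2}::nat set) \<noteq> {0,Suc 0,2}"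
  "({0,1}::nat set) \<noteq> {}"
  "({0,Suc 0}::nat set) \<noteq> {}"
  "({0,1}::nat set) \<noteq> {0}"
  "({0,Suc 0}::nat set) \<noteq> {0}"
  "({0,1}::nat set) \<noteq> {1}"
  "({0,Suc 0}::nat set) \<noteq> {Suc 0}"
  "({0,1}::nat set) \<noteq> {2}"
  "({0,Suc 0}::nat set) \<noteq> {2}"
  "({0,1}::nat set) \<noteq> {0,2}"
  "({0,Suc 0}::nat set) \<noteq> {0,2}"
  "({0,1}::nat set) \<noteq> {1,2}"
  "({0,Suc 0}::nat set) \<noteq> {Suc 0,2}"
  "({0,1}::nat set) \<noteq> {0,1,2}"
  "({0,Suc 0}::nat set) \<noteq> {0,Suc 0,2}"
  "({0,2}::nat set) \<noteq> {}"
  "({0,2}::nat set) \<noteq> {0}"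
  "({0,2}::nat set) \<noteq> {1}"
  "({0,2}::nat set) \<noteq> {Suc 0}"
  "({0,2}::nat set) \<noteq> {2}"
  "({0,2}::nat set) \<noteq> {0,1}"
  "({0,2}::nat set) \<noteq> {0,Suc 0}"
  "({0,2}::nat set) \<noteq> {1,2}"
  "({0,2}::nat set) \<noteq> {Suc 0,2}"
  "({0,2}::nat set) \<noteq> {0,1,2}"
  "({0,2}::nat set) \<noteq> {0,Suc 0,2}"
  "({1,2}::nat set) \<noteq> {}"
  "({Suc 0,2}::nat set) \<noteq> {}"
  "({1,2}::nat set) \<noteq> {0}"
  "({Suc 0,2}::nat set) \<noteq> {0}"
  "({1,2}::nat set) \<noteq> {1}"
  "({Suc 0,2}::nat set) \<noteq> {Suc 0}"
  "({1,2}::nat set) \<noteq> {2}"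
  "({Suc 0,2}::nat set) \<noteq> {2}"
  "({1,2}::nat set) \<noteq> {0,1}"
  "({Suc 0,2}::nat set) \<noteq> {0,Suc 0}"
  "({1,2}::nat set) \<noteq> {0,2}"
  "({Suc 0,2}::nat set) \<noteq> {0,2}"
  "({1,2}::nat set) \<noteq> {0,1,2}"
  "({Suc 0,2}::nat set) \<noteq> {0,Suc 0,2}"
  "({0,1,2}::nat set) \<noteq> {}"
  "({0,Suc 0,2}::nat set) \<noteq> {}"
  "({0,1,2}::nat set) \<noteq> {0}"
  "({0,Suc 0,2}::nat set) \<noteq> {0}"
  "({0,1,2}::nat set) \<noteq> {1}"
  "({0,Suc 0,2}::nat set) \<noteq> {Suc 0}"
  "({0,1,2}::nat set) \<noteq> {2}"
  "({0,Suc 0,2}::nat set) \<noteq> {2}"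
  "({0,1,2}::nat set) \<noteq> {0,1}"
  "({0,Suc 0,2}::nat set) \<noteq> {0,Suc 0}"
  "({0,1,2}::nat set) \<noteq> {0,2}"
  "({0,Suc 0,2}::nat set) \<noteq> {0,2}"
  "({0,1,2}::nat set) \<noteq> {1,2}"
  "({0,Suc 0,2}::nat set) \<noteq> {Suc 0,2}"
proof -
  show "({}::nat set) \<noteq> {0}" by (rule neqI2[where x=0]) simp_all
  show "({}::nat set) \<noteq> {1}" by (rule neqI2[where x=1]) simp_all
  show "({}::nat set) \<noteq> {Suc 0}" by (rule neqI2[where x=1]) simp_all
  show "({}::nat set) \<noteq> {2}" by (rule neqI2[where x=2]) simp_all
  show "({}::nat set) \<noteq> {0,1}" by (rule neqI2[where x=0]) simp_all
  show "({}::nat set) \<noteq> {0,Suc 0}" by (rule neqI2[where x=0]) simp_all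
  show "({}::nat set) \<noteq> {0,2}" by (rule neqI2[where x=0]) simp_all
  show "({}::nat set) \<noteq> {1,2}" by (rule neqI2[where x=1]) simp_all
  show "({}::nat set) \<noteq> {Suc 0,2}" by (rule neqI2[where x=1]) simp_all
  show "({}::nat set) \<noteq> {0,1,2}" by (rule neqI2[where x=0]) simp_all
  show "({}::nat set) \<noteq> {0,Suc 0,2}" by (rule neqI2[where x=0]) simp_all
  show "({0}::nat set) \<noteq> {}" by (rule neqI1[where x=0]) simp_all
  show "({0}::nat set) \<noteq> {1}" by (rule neqI1[where x=0]) simp_all
  show "({0}::nat set) \<noteq> {Suc 0}" by (rule neqI1[where x=0]) simp_all
  show "({0}::nat set) \<noteq> {2}" by (rule neqI1[where x=0]) simp_all
  show "({0}::nat set) \<noteq> {0,1}" by (rule neqI2[where x=1]) simp_all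
  show "({0}::nat set) \<noteq> {0,Suc 0}" by (rule neqI2[where x=1]) simp_all
  show "({0}::nat set) \<noteq> {0,2}" by (rule neqI2[where x=2]) simp_all
  show "({0}::nat set) \<noteq> {1,2}" by (rule neqI1[where x=0]) simp_all
  show "({0}::nat set) \<noteq> {Suc 0,2}" by (rule neqI1[where x=0]) simp_all
  show "({0}::nat set) \<noteq> {0,1,2}" by (rule neqI2[where x=1]) simp_all
  show "({0}::nat set) \<noteq> {0,Suc 0,2}" by (rule neqI2[where x=1]) simp_all
  show "({1}::nat set) \<noteq> {}" by (rule neqI1[where x=1]) simp_all
  show "({Suc 0}::nat set) \<noteq> {}" by (rule neqI1[where x=1]) simp_all
  show "({1}::nat set) \<noteq> {0}" by (rule neqI1[where x=1]) simp_all
  show "({Suc 0}::nat set) \<noteq> {0}" by (rule neqI1[where x=1]) simp_all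
  show "({1}::nat set) \<noteq> {2}" by (rule neqI1[where x=1]) simp_all
  show "({Suc 0}::nat set) \<noteq> {2}" by (rule neqI1[where x=1]) simp_all
  show "({1}::nat set) \<noteq> {0,1}" by (rule neqI2[where x=0]) simp_all
  show "({Suc 0}::nat set) \<noteq> {0,Suc 0}" by (rule neqI2[where x=0]) simp_all
  show "({1}::nat set) \<noteq> {0,2}" by (rule neqI1[where x=1]) simp_all
  show "({Suc 0}::nat set) \<noteq> {0,2}" by (rule neqI1[where x=1]) simp_all
  show "({1}::nat set) \<noteq> {1,2}" by (rule neqI2[where x=2]) simp_all
  show "({Suc 0}::nat set) \<noteq> {Suc 0,2}" by (rule neqI2[where x=2]) simp_all
  show "({1}::nat set) \<noteq> {0,1,2}" by (rule neqI2[where x=0]) simp_all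
  show "({Suc 0}::nat set) \<noteq> {0,Suc 0,2}" by (rule neqI2[where x=0]) simp_all
  show "({2}::nat set) \<noteq> {}" by (rule neqI1[where x=2]) simp_all
  show "({2}::nat set) \<noteq> {0}" by (rule neqI1[where x=2]) simp_all
  show "({2}::nat set) \<noteq> {1}" by (rule neqI1[where x=2]) simp_all
  show "({2}::nat set) \<noteq> {Suc 0}" by (rule neqI1[where x=2]) simp_all
  show "({2}::nat set) \<noteq> {0,1}" by (rule neqI1[where x=2]) simp_all
  show "({2}::nat set) \<noteq> {0,Suc 0}" by (rule neqI1[where x=2]) simp_all
  show "({2}::nat set) \<noteq> {0,2}" by (rule neqI2[where x=0]) simp_all
  show "({2}::nat set) \<noteq> {1,2}" by (rule neqI2[where x=1]) simp_all
  show "({2}::nat set) \<noteq> {Suc 0,2}" by (rule neqI2[where x=1]) simp_all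
  show "({2}::nat set) \<noteq> {0,1,2}" by (rule neqI2[where x=0]) simp_all
  show "({2}::nat set) \<noteq> {0,Suc 0,2}" by (rule neqI2[where x=0]) simp_all
  show "({0,1}::nat set) \<noteq> {}" by (rule neqI1[where x=0]) simp_all
  show "({0,Suc 0}::nat set) \<noteq> {}" by (rule neqI1[where x=0]) simp_all
  show "({0,1}::nat set) \<noteq> {0}" by (rule neqI1[where x=1]) simp_all
  show "({0,Suc 0}::nat set) \<noteq> {0}" by (rule neqI1[where x=1]) simp_all
  show "({0,1}::nat set) \<noteq> {1}" by (rule neqI1[where x=0]) simp_all
  show "({0,Suc 0}::nat set) \<noteq> {Suc 0}" by (rule neqI1[where x=0]) simp_all
  show "({0,1}::nat set) \<noteq> {2}" by (rule neqI1[where x=0]) simp_all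
  show "({0,Suc 0}::nat set) \<noteq> {2}" by (rule neqI1[where x=0]) simp_all
  show "({0,1}::nat set) \<noteq> {0,2}" by (rule neqI1[where x=1]) simp_all
  show "({0,Suc 0}::nat set) \<noteq> {0,2}" by (rule neqI1[where x=1]) simp_all
  show "({0,1}::nat set) \<noteq> {1,2}" by (rule neqI1[where x=0]) simp_all
  show "({0,Suc 0}::nat set) \<noteq> {Suc 0,2}" by (rule neqI1[where x=0]) simp_all
  show "({0,1}::nat set) \<noteq> {0,1,2}" by (rule neqI2[where x=2]) simp_all
  show "({0,Suc 0}::nat set) \<noteq> {0,Suc 0,2}" by (rule neqI2[where x=2]) simp_all
  show "({0,2}::nat set) \<noteq> {}" by (rule neqI1[where x=0]) simp_all
  show "({0,2}::nat set) \<noteq> {0}" by (rule neqI1[where x=2]) simp_all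
  show "({0,2}::nat set) \<noteq> {1}" by (rule neqI1[where x=0]) simp_all
  show "({0,2}::nat set) \<noteq> {Suc 0}" by (rule neqI1[where x=0]) simp_all
  show "({0,2}::nat set) \<noteq> {2}" by (rule neqI1[where x=0]) simp_all
  show "({0,2}::nat set) \<noteq> {0,1}" by (rule neqI1[where x=2]) simp_all
  show "({0,2}::nat set) \<noteq> {0,Suc 0}" by (rule neqI1[where x=2]) simp_all
  show "({0,2}::nat set) \<noteq> {1,2}" by (rule neqI1[where x=0]) simp_all
  show "({0,2}::nat set) \<noteq> {Suc 0,2}" by (rule neqI1[where x=0]) simp_all
  show "({0,2}::nat set) \<noteq> {0,1,2}" by (rule neqI2[where x=1]) simp_all
  show "({0,2}::nat set) \<noteq> {0,Suc 0,2}" by (rule neqI2[where x=1]) simp_all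
  show "({1,2}::nat set) \<noteq> {}" by (rule neqI1[where x=1]) simp_all
  show "({Suc 0,2}::nat set) \<noteq> {}" by (rule neqI1[where x=1]) simp_all
  show "({1,2}::nat set) \<noteq> {0}" by (rule neqI1[where x=1]) simp_all
  show "({Suc 0,2}::nat set) \<noteq> {0}" by (rule neqI1[where x=1]) simp_all
  show "({1,2}::nat set) \<noteq> {1}" by (rule neqI1[where x=2]) simp_all
  show "({Suc 0,2}::nat set) \<noteq> {Suc 0}" by (rule neqI1[where x=2]) simp_all
  show "({1,2}::nat set) \<noteq> {2}" by (rule neqI1[where x=1]) simp_all
  show "({Suc 0,2}::nat set) \<noteq> {2}" by (rule neqI1[where x=1]) simp_all
  show "({1,2}::nat set) \<noteq> {0,1}" by (rule neqI1[where x=2]) simp_all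
  show "({Suc 0,2}::nat set) \<noteq> {0,Suc 0}" by (rule neqI1[where x=2]) simp_all
  show "({1,2}::nat set) \<noteq> {0,2}" by (rule neqI1[where x=1]) simp_all
  show "({Suc 0,2}::nat set) \<noteq> {0,2}" by (rule neqI1[where x=1]) simp_all
  show "({1,2}::nat set) \<noteq> {0,1,2}" by (rule neqI2[where x=0]) simp_all
  show "({Suc 0,2}::nat set) \<noteq> {0,Suc 0,2}" by (rule neqI2[where x=0]) simp_all
  show "({0,1,2}::nat set) \<noteq> {}" by (rule neqI1[where x=0]) simp_all
  show "({0,Suc 0,2}::nat set) \<noteq> {}" by (rule neqI1[where x=0]) simp_all
  show "({0,1,2}::nat set) \<noteq> {0}" by (rule neqI1[where x=1]) simp_all
  show "({0,Suc 0,2}::nat set) \<noteq> {0}" by (rule neqI1[where x=1]) simp_all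
  show "({0,1,2}::nat set) \<noteq> {1}" by (rule neqI1[where x=0]) simp_all
  show "({0,Suc 0,2}::nat set) \<noteq> {Suc 0}" by (rule neqI1[where x=0]) simp_all
  show "({0,1,2}::nat set) \<noteq> {2}" by (rule neqI1[where x=0]) simp_all
  show "({0,Suc 0,2}::nat set) \<noteq> {2}" by (rule neqI1[where x=0]) simp_all
  show "({0,1,2}::nat set) \<noteq> {0,1}" by (rule neqI1[where x=2]) simp_all
  show "({0,Suc 0,2}::nat set) \<noteq> {0,Suc 0}" by (rule neqI1[where x=2]) simp_all
  show "({0,1,2}::nat set) \<noteq> {0,2}" by (rule neqI1[where x=1]) simp_all
  show "({0,Suc 0,2}::nat set) \<noteq> {0,2}" by (rule neqI1[where x=1]) simp_all
  show "({0,1,2}::nat set) \<noteq> {1,2}" by (rule neqI1[where x=0]) simp_all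
  show "({0,Suc 0,2}::nat set) \<noteq> {Suc 0,2}" by (rule neqI1[where x=0]) simp_all
qed



lemma c3: "card {0,1,2::nat} = 3" by simp
lemma t2: "(F::nat set) \<subseteq> {0,1,2} \<Longrightarrow> card F \<ge> 3 \<Longrightarrow> F = {0,1,2}"
  using card_subset_eq[of "{0,1,2::nat}" F] card_mono[of "{0,1,2::nat}" F] c3 by simp
lemma Suc2_3: "Suc 2 = (3::nat)" by simp

lemma kb_sub: "F \<in> kbasis I \<alpha> i \<Longrightarrow> F \<subseteq> {0,1,2} \<and> card F = i"
  by (simp add: kbasis_def)

lemma kch0: "kchain I \<alpha> i c \<Longrightarrow> F \<notin> kbasis I \<alpha> i \<Longrightarrow> c F = 0"
  by (simp add: kchain_def)

lemma kch0': "kchain I \<alpha> i c \<Longrightarrow> \<not> (F \<subseteq> {0,1,2} \<and> card F = i) \<Longrightarrow> c F = 0"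
  using kb_sub kch0 by blast

lemma kdiff_eqI:
  fixes b c :: "nat set \<Rightarrow> 'k::field"
  assumes "kdiff b {} = c {}" "kdiff b {0} = c {0}" "kdiff b {1} = c {1}" "kdiff b {2} = c {2}"
    "kdiff b {0,1} = c {0,1}" "kdiff b {0,2} = c {0,2}" "kdiff b {1,2} = c {1,2}"
    "kdiff b {0,1,2} = c {0,1,2}" "kchain I \<alpha> i c"
  shows "kdiff b = c"
proof
  fix G
  show "kdiff b G = c G"
  proof (cases "G \<subseteq> {0,1,2}")
    case True
    then show ?thesis using sub012[OF True] assms by auto
  next
    case False
    then show ?thesis using assms(9) kd(9) kch0' by metis
  qed
qed

lemma kdiff_zero: "kdiff (\<lambda>_. 0::'k::field) = (\<lambda>_. 0)"
  by (auto simp: kdiff_def)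

lemma fin_sub: "(G::nat set) \<subseteq> {0,1,2} \<Longrightarrow> finite G"
proof -
  have "finite {0,1,2::nat}" by simp
  then show "G \<subseteq> {0,1,2} \<Longrightarrow> finite G" using finite_subset by blast
qed

lemma tv0:
  assumes "{} \<in> kbasis I \<alpha> 0 \<Longrightarrow> \<exists>j. {j} \<in> kbasis I \<alpha> 1"
  shows "tor_vanishes (k::'k::field itself) I 0 \<alpha>"
  unfolding tor_vanishes_def
proof (intro allI impI)
  fix c :: "nat set \<Rightarrow> 'k"
  assume a: "kchain I \<alpha> 0 c \<and> kdiff c = (\<lambda>_. 0)"
  have cz: "c G = 0" if "G \<noteq> {}" for G
  proof -
    have "\<not> (G \<subseteq> {0,1,2} \<and> card G = 0)" using that fin_sub by force
    then show ?thesis using a kch0' by blast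
  qed
  show "\<exists>b. kchain I \<alpha> (Suc 0) b \<and> kdiff b = c"
  proof (cases "{} \<in> kbasis I \<alpha> 0")
    case False
    then have "c = (\<lambda>_. 0)" using cz a kch0 by metis
    then show ?thesis
      by (intro exI[of _ "\<lambda>_. 0"]) (simp add: kchain_def kdiff_zero)
  next
    case True
    then obtain j where j: "{j} \<in> kbasis I \<alpha> 1" using assms by blast
    then have "j \<in> {0,1,2}" using kb_sub by blast
    then have j3: "j = 0 \<or> j = 1 \<or> j = 2" by simp
    define b :: "nat set \<Rightarrow> 'k" where "b = (\<lambda>F. if F = {j} then c {} else 0)"
    have "kchain I \<alpha> 1 b" using j unfolding kchain_def b_def by simp
    moreover have "kdiff b = c"
      using j3 apply (elim disjE)
      by (rule kdiff_eqI[where I=I and \<alpha>=\<alpha> and i=0]; (simp only: kd b_def)?; simp add: setneq cz a)+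
    ultimately show ?thesis unfolding One_nat_def by blast
  qed
qed


lemma chz:
  assumes "kchain I \<alpha> i c"
  shows "i \<noteq> 0 \<Longrightarrow> c {} = 0" "i \<noteq> 1 \<Longrightarrow> c {0} = 0" "i \<noteq> 1 \<Longrightarrow> c {1} = 0"
    "i \<noteq> 1 \<Longrightarrow> c {2} = 0" "i \<noteq> 2 \<Longrightarrow> c {0,1} = 0" "i \<noteq> 2 \<Longrightarrow> c {0,2} = 0"
    "i \<noteq> 2 \<Longrightarrow> c {1,2} = 0" "i \<noteq> 3 \<Longrightarrow> c {0,1,2} = 0"
proof -
  have cd: "card {0::nat} = 1" "card {1::nat} = 1" "card {2::nat} = 1" "card {0,1::nat} = 2"
     "card {0,2::nat} = 2" "card {1,2::nat} = 2" "card {0,1,2::nat} = 3" "card ({}::nat set) = 0" by simp_all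
  show "i \<noteq> 0 \<Longrightarrow> c {} = 0" using kch0'[OF assms, of "{}"] cd by simp
  show "i \<noteq> 1 \<Longrightarrow> c {0} = 0" using kch0'[OF assms, of "{0}"] cd by simp
  show "i \<noteq> 1 \<Longrightarrow> c {1} = 0" using kch0'[OF assms, of "{1}"] cd by simp
  show "i \<noteq> 1 \<Longrightarrow> c {2} = 0" using kch0'[OF assms, of "{2}"] cd by simp
  show "i \<noteq> 2 \<Longrightarrow> c {0,1} = 0" using kch0'[OF assms, of "{0,1}"] cd by simp
  show "i \<noteq> 2 \<Longrightarrow> c {0,2} = 0" using kch0'[OF assms, of "{0,2}"] cd by simp
  show "i \<noteq> 2 \<Longrightarrow> c {1,2} = 0" using kch0'[OF assms, of "{1,2}"] cd by simp
  show "i \<noteq> 3 \<Longrightarrow> c {0,1,2} = 0" using kch0'[OF assms, of "{0,1,2}"] cd by simp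
qed

lemma tv2s:
  assumes "{0,1} \<in> kbasis I \<alpha> 2 \<Longrightarrow> {0,2} \<in> kbasis I \<alpha> 2 \<Longrightarrow> {1,2} \<in> kbasis I \<alpha> 2
     \<Longrightarrow> {0,1,2} \<in> kbasis I \<alpha> 3"
  shows "tor_vanishes (k::'k::field itself) I 2 \<alpha>"
  unfolding tor_vanishes_def
proof (intro allI impI)
  fix c :: "nat set \<Rightarrow> 'k"
  assume a: "kchain I \<alpha> 2 c \<and> kdiff c = (\<lambda>_. 0)"
  have e0: "- c {0,1} - c {0,2} = 0" using fun_cong[OF conjunct2[OF a], of "{0}"] by (simp only: kd)
  have e1: "c {0,1} - c {1,2} = 0" using fun_cong[OF conjunct2[OF a], of "{1}"] by (simp only: kd)
  have e2: "c {0,2} = - c {0,1}" using e0 by (simp add: algebra_simps eq_neg_iff_add_eq_0)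
  have e3: "c {1,2} = c {0,1}" using e1 by simp
  note z = chz[OF conjunct1[OF a]]
  define b :: "nat set \<Rightarrow> 'k" where "b = (\<lambda>F. if F = {0,1,2} then c {0,1} else 0)"
  have "kchain I \<alpha> 3 b"
    unfolding kchain_def
  proof (intro allI impI)
    fix F assume F: "F \<notin> kbasis I \<alpha> 3"
    show "b F = 0"
    proof (cases "F = {0,1,2}")
      case True
      then have "\<not> ({0,1} \<in> kbasis I \<alpha> 2 \<and> {0,2} \<in> kbasis I \<alpha> 2 \<and> {1,2} \<in> kbasis I \<alpha> 2)"
        using assms F by blast
      then have "c {0,1} = 0 \<or> c {0,2} = 0 \<or> c {1,2} = 0" using kch0[OF conjunct1[OF a]] by blast
      then have "c {0,1} = 0" using e2 e3 by (metis neg_equal_0_iff_equal)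
      then show ?thesis using True b_def by simp
    next
      case False then show ?thesis using b_def by simp
    qed
  qed
  moreover have "kdiff b = c"
    apply (rule kdiff_eqI[where I=I and \<alpha>=\<alpha> and i=2])
    apply (simp_all only: kd b_def)
    apply (simp_all add: setneq z[simplified] e2[simplified] e3[simplified] conjunct1[OF a])
    done
  ultimately show "\<exists>b. kchain I \<alpha> (Suc 2) b \<and> kdiff b = c" unfolding Suc2_3 by blast
qed


lemma tv2n:
  assumes "tor_vanishes (k::'k::field itself) I 2 \<alpha>"
    "{0,1} \<in> kbasis I \<alpha> 2" "{0,2} \<in> kbasis I \<alpha> 2" "{1,2} \<in> kbasis I \<alpha> 2"
  shows "{0,1,2} \<in> kbasis I \<alpha> 3"
proof (rule ccontr)
  assume n: "{0,1,2} \<notin> kbasis I \<alpha> 3"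
  define c :: "nat set \<Rightarrow> 'k" where "c = (\<lambda>F. if F = {0,1} then 1 else if F = {0,2} then -1 else if F = {1,2} then 1 else 0)"
  have ch: "kchain I \<alpha> 2 c" unfolding kchain_def
  proof (intro allI impI)
    fix F assume "F \<notin> kbasis I \<alpha> 2"
    then have "F \<noteq> {0,1}" "F \<noteq> {0,2}" "F \<noteq> {1,2}" using assms(2-4) by blast+
    then show "c F = 0" unfolding c_def by simp
  qed
  have "kdiff c = (\<lambda>_. 0)"
    apply (rule kdiff_eqI[where I=I and \<alpha>=\<alpha> and i=2])
    apply (simp_all only: kd c_def)
    apply (simp_all add: setneq kchain_def)
    done
  then obtain b where b: "kchain I \<alpha> 3 b" "kdiff b = c"
    using assms(1) ch unfolding tor_vanishes_def Suc2_3 by blast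
  have "b {0,1,2} = 0" using b(1) n kch0 by blast
  moreover have "kdiff b {0,1} = c {0,1}" using b(2) by simp
  ultimately show False by (simp only: kd) (simp add: c_def setneq)
qed

lemma tv1n_01:
  assumes tv: "tor_vanishes (k::'k::field itself) I 1 \<alpha>"
    and r: "{0} \<in> kbasis I \<alpha> 1" "{1} \<in> kbasis I \<alpha> 1"
    and n1: "{0,1} \<in> kbasis I \<alpha> 2 \<Longrightarrow> False"
    and n2: "{0,2} \<in> kbasis I \<alpha> 2 \<Longrightarrow> {1,2} \<in> kbasis I \<alpha> 2 \<Longrightarrow> False"
  shows False
proof -
  define c :: "nat set \<Rightarrow> 'k" where "c = (\<lambda>F. if F = {0} then 1 else if F = {1} then -1 else 0)"
  have ch: "kchain I \<alpha> 1 c" unfolding kchain_def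
  proof (intro allI impI)
    fix F assume "F \<notin> kbasis I \<alpha> 1"
    then have "F \<noteq> {0}" "F \<noteq> {1}" using r by blast+
    then show "c F = 0" unfolding c_def by simp
  qed
  have "kdiff c = (\<lambda>_. 0)"
    apply (rule kdiff_eqI[where I=I and \<alpha>=\<alpha> and i=1])
    apply (simp_all only: kd c_def)
    apply (simp_all add: setneq kchain_def)
    done
  then obtain b where b: "kchain I \<alpha> 2 b" "kdiff b = c"
    using tv ch unfolding tor_vanishes_def by (metis numeral_2_eq_2 One_nat_def)
  have h0: "kdiff b {0} = c {0}" "kdiff b {1} = c {1}" "kdiff b {2} = c {2}" using b(2) by simp_all
  then have h: "- b {0,1} - b {0,2} = c {0}" "b {0,1} - b {1,2} = c {1}" "b {0,2} + b {1,2} = c {2}"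
    by (simp_all only: kd)
  have z1: "b {0,1} = 0" using kch0[OF b(1)] n1 by blast
  have z2: "b {0,2} = 0 \<or> b {1,2} = 0" using kch0[OF b(1)] n2 by blast
  have cv: "c {0} = 1" "c {1} = -1" "c {2} = 0" unfolding c_def by (simp_all add: setneq)
  show False using z2 h z1 cv by (elim disjE) simp_all
qed

lemma tv1n_02:
  assumes tv: "tor_vanishes (k::'k::field itself) I 1 \<alpha>"
    and r: "{0} \<in> kbasis I \<alpha> 1" "{2} \<in> kbasis I \<alpha> 1"
    and n1: "{0,2} \<in> kbasis I \<alpha> 2 \<Longrightarrow> False"
    and n2: "{0,1} \<in> kbasis I \<alpha> 2 \<Longrightarrow> {1,2} \<in> kbasis I \<alpha> 2 \<Longrightarrow> False"
  shows False
proof -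
  define c :: "nat set \<Rightarrow> 'k" where "c = (\<lambda>F. if F = {0} then 1 else if F = {2} then -1 else 0)"
  have ch: "kchain I \<alpha> 1 c" unfolding kchain_def
  proof (intro allI impI)
    fix F assume "F \<notin> kbasis I \<alpha> 1"
    then have "F \<noteq> {0}" "F \<noteq> {2}" using r by blast+
    then show "c F = 0" unfolding c_def by simp
  qed
  have "kdiff c = (\<lambda>_. 0)"
    apply (rule kdiff_eqI[where I=I and \<alpha>=\<alpha> and i=1])
    apply (simp_all only: kd c_def)
    apply (simp_all add: setneq kchain_def)
    done
  then obtain b where b: "kchain I \<alpha> 2 b" "kdiff b = c"
    using tv ch unfolding tor_vanishes_def by (metis numeral_2_eq_2 One_nat_def)
  have h0: "kdiff b {0} = c {0}" "kdiff b {1} = c {1}" "kdiff b {2} = c {2}" using b(2) by simp_all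
  then have h: "- b {0,1} - b {0,2} = c {0}" "b {0,1} - b {1,2} = c {1}" "b {0,2} + b {1,2} = c {2}"
    by (simp_all only: kd)
  have z1: "b {0,2} = 0" using kch0[OF b(1)] n1 by blast
  have z2: "b {0,1} = 0 \<or> b {1,2} = 0" using kch0[OF b(1)] n2 by blast
  have cv: "c {0} = 1" "c {2} = -1" "c {1} = 0" unfolding c_def by (simp_all add: setneq)
  show False using z2 h z1 cv by (elim disjE) simp_all
qed

lemma tv1n_12:
  assumes tv: "tor_vanishes (k::'k::field itself) I 1 \<alpha>"
    and r: "{1} \<in> kbasis I \<alpha> 1" "{2} \<in> kbasis I \<alpha> 1"
    and n1: "{1,2} \<in> kbasis I \<alpha> 2 \<Longrightarrow> False"
    and n2: "{0,1} \<in> kbasis I \<alpha> 2 \<Longrightarrow> {0,2} \<in> kbasis I \<alpha> 2 \<Longrightarrow> False"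
  shows False
proof -
  define c :: "nat set \<Rightarrow> 'k" where "c = (\<lambda>F. if F = {1} then 1 else if F = {2} then -1 else 0)"
  have ch: "kchain I \<alpha> 1 c" unfolding kchain_def
  proof (intro allI impI)
    fix F assume "F \<notin> kbasis I \<alpha> 1"
    then have "F \<noteq> {1}" "F \<noteq> {2}" using r by blast+
    then show "c F = 0" unfolding c_def by simp
  qed
  have "kdiff c = (\<lambda>_. 0)"
    apply (rule kdiff_eqI[where I=I and \<alpha>=\<alpha> and i=1])
    apply (simp_all only: kd c_def)
    apply (simp_all add: setneq kchain_def)
    done
  then obtain b where b: "kchain I \<alpha> 2 b" "kdiff b = c"
    using tv ch unfolding tor_vanishes_def by (metis numeral_2_eq_2 One_nat_def)
  have h0: "kdiff b {0} = c {0}" "kdiff b {1} = c {1}" "kdiff b {2} = c {2}" using b(2) by simp_all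
  then have h: "- b {0,1} - b {0,2} = c {0}" "b {0,1} - b {1,2} = c {1}" "b {0,2} + b {1,2} = c {2}"
    by (simp_all only: kd)
  have z1: "b {1,2} = 0" using kch0[OF b(1)] n1 by blast
  have z2: "b {0,1} = 0 \<or> b {0,2} = 0" using kch0[OF b(1)] n2 by blast
  have cv: "c {1} = 1" "c {2} = -1" "c {0} = 0" unfolding c_def by (simp_all add: setneq)
  show False using z2 h z1 cv by (elim disjE) simp_all
qed

lemma tv1n_10:
  assumes tv: "tor_vanishes (k::'k::field itself) I 1 \<alpha>"
    and r: "{1} \<in> kbasis I \<alpha> 1" "{0} \<in> kbasis I \<alpha> 1"
    and n1: "{0,1} \<in> kbasis I \<alpha> 2 \<Longrightarrow> False"
    and n2: "{1,2} \<in> kbasis I \<alpha> 2 \<Longrightarrow> {0,2} \<in> kbasis I \<alpha> 2 \<Longrightarrow> False"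
  shows False
proof -
  define c :: "nat set \<Rightarrow> 'k" where "c = (\<lambda>F. if F = {1} then 1 else if F = {0} then -1 else 0)"
  have ch: "kchain I \<alpha> 1 c" unfolding kchain_def
  proof (intro allI impI)
    fix F assume "F \<notin> kbasis I \<alpha> 1"
    then have "F \<noteq> {1}" "F \<noteq> {0}" using r by blast+
    then show "c F = 0" unfolding c_def by simp
  qed
  have "kdiff c = (\<lambda>_. 0)"
    apply (rule kdiff_eqI[where I=I and \<alpha>=\<alpha> and i=1])
    apply (simp_all only: kd c_def)
    apply (simp_all add: setneq kchain_def)
    done
  then obtain b where b: "kchain I \<alpha> 2 b" "kdiff b = c"
    using tv ch unfolding tor_vanishes_def by (metis numeral_2_eq_2 One_nat_def)
  have h0: "kdiff b {0} = c {0}" "kdiff b {1} = c {1}" "kdiff b {2} = c {2}" using b(2) by simp_all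
  then have h: "- b {0,1} - b {0,2} = c {0}" "b {0,1} - b {1,2} = c {1}" "b {0,2} + b {1,2} = c {2}"
    by (simp_all only: kd)
  have z1: "b {0,1} = 0" using kch0[OF b(1)] n1 by blast
  have z2: "b {1,2} = 0 \<or> b {0,2} = 0" using kch0[OF b(1)] n2 by blast
  have cv: "c {1} = 1" "c {0} = -1" "c {2} = 0" unfolding c_def by (simp_all add: setneq)
  show False using z2 h z1 cv by (elim disjE) simp_all
qed

lemma tv1n_20:
  assumes tv: "tor_vanishes (k::'k::field itself) I 1 \<alpha>"
    and r: "{2} \<in> kbasis I \<alpha> 1" "{0} \<in> kbasis I \<alpha> 1"
    and n1: "{0,2} \<in> kbasis I \<alpha> 2 \<Longrightarrow> False"
    and n2: "{1,2} \<in> kbasis I \<alpha> 2 \<Longrightarrow> {0,1} \<in> kbasis I \<alpha> 2 \<Longrightarrow> False"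
  shows False
proof -
  define c :: "nat set \<Rightarrow> 'k" where "c = (\<lambda>F. if F = {2} then 1 else if F = {0} then -1 else 0)"
  have ch: "kchain I \<alpha> 1 c" unfolding kchain_def
  proof (intro allI impI)
    fix F assume "F \<notin> kbasis I \<alpha> 1"
    then have "F \<noteq> {2}" "F \<noteq> {0}" using r by blast+
    then show "c F = 0" unfolding c_def by simp
  qed
  have "kdiff c = (\<lambda>_. 0)"
    apply (rule kdiff_eqI[where I=I and \<alpha>=\<alpha> and i=1])
    apply (simp_all only: kd c_def)
    apply (simp_all add: setneq kchain_def)
    done
  then obtain b where b: "kchain I \<alpha> 2 b" "kdiff b = c"
    using tv ch unfolding tor_vanishes_def by (metis numeral_2_eq_2 One_nat_def)
  have h0: "kdiff b {0} = c {0}" "kdiff b {1} = c {1}" "kdiff b {2} = c {2}" using b(2) by simp_all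
  then have h: "- b {0,1} - b {0,2} = c {0}" "b {0,1} - b {1,2} = c {1}" "b {0,2} + b {1,2} = c {2}"
    by (simp_all only: kd)
  have z1: "b {0,2} = 0" using kch0[OF b(1)] n1 by blast
  have z2: "b {1,2} = 0 \<or> b {0,1} = 0" using kch0[OF b(1)] n2 by blast
  have cv: "c {2} = 1" "c {0} = -1" "c {1} = 0" unfolding c_def by (simp_all add: setneq)
  show False using z2 h z1 cv by (elim disjE) simp_all
qed

lemma tv1n_21:
  assumes tv: "tor_vanishes (k::'k::field itself) I 1 \<alpha>"
    and r: "{2} \<in> kbasis I \<alpha> 1" "{1} \<in> kbasis I \<alpha> 1"
    and n1: "{1,2} \<in> kbasis I \<alpha> 2 \<Longrightarrow> False"
    and n2: "{0,2} \<in> kbasis I \<alpha> 2 \<Longrightarrow> {0,1} \<in> kbasis I \<alpha> 2 \<Longrightarrow> False"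
  shows False
proof -
  define c :: "nat set \<Rightarrow> 'k" where "c = (\<lambda>F. if F = {2} then 1 else if F = {1} then -1 else 0)"
  have ch: "kchain I \<alpha> 1 c" unfolding kchain_def
  proof (intro allI impI)
    fix F assume "F \<notin> kbasis I \<alpha> 1"
    then have "F \<noteq> {2}" "F \<noteq> {1}" using r by blast+
    then show "c F = 0" unfolding c_def by simp
  qed
  have "kdiff c = (\<lambda>_. 0)"
    apply (rule kdiff_eqI[where I=I and \<alpha>=\<alpha> and i=1])
    apply (simp_all only: kd c_def)
    apply (simp_all add: setneq kchain_def)
    done
  then obtain b where b: "kchain I \<alpha> 2 b" "kdiff b = c"
    using tv ch unfolding tor_vanishes_def by (metis numeral_2_eq_2 One_nat_def)
  have h0: "kdiff b {0} = c {0}" "kdiff b {1} = c {1}" "kdiff b {2} = c {2}" using b(2) by simp_all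
  then have h: "- b {0,1} - b {0,2} = c {0}" "b {0,1} - b {1,2} = c {1}" "b {0,2} + b {1,2} = c {2}"
    by (simp_all only: kd)
  have z1: "b {1,2} = 0" using kch0[OF b(1)] n1 by blast
  have z2: "b {0,2} = 0 \<or> b {0,1} = 0" using kch0[OF b(1)] n2 by blast
  have cv: "c {2} = 1" "c {1} = -1" "c {0} = 0" unfolding c_def by (simp_all add: setneq)
  show False using z2 h z1 cv by (elim disjE) simp_all
qed

lemma tv1s:
  assumes H01: "{0} \<in> kbasis I \<alpha> 1 \<Longrightarrow> {1} \<in> kbasis I \<alpha> 1 \<Longrightarrow>
      {0,1} \<in> kbasis I \<alpha> 2 \<or> ({0,2} \<in> kbasis I \<alpha> 2 \<and> {1,2} \<in> kbasis I \<alpha> 2)"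
    and H02: "{0} \<in> kbasis I \<alpha> 1 \<Longrightarrow> {2} \<in> kbasis I \<alpha> 1 \<Longrightarrow>
      {0,2} \<in> kbasis I \<alpha> 2 \<or> ({0,1} \<in> kbasis I \<alpha> 2 \<and> {1,2} \<in> kbasis I \<alpha> 2)"
    and H12: "{1} \<in> kbasis I \<alpha> 1 \<Longrightarrow> {2} \<in> kbasis I \<alpha> 1 \<Longrightarrow>
      {1,2} \<in> kbasis I \<alpha> 2 \<or> ({0,1} \<in> kbasis I \<alpha> 2 \<and> {0,2} \<in> kbasis I \<alpha> 2)"
  shows "tor_vanishes (k::'k::field itself) I 1 \<alpha>"
  unfolding tor_vanishes_def
proof (intro allI impI)
  fix c :: "nat set \<Rightarrow> 'k"
  assume a: "kchain I \<alpha> 1 c \<and> kdiff c = (\<lambda>_. 0)"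
  have ch: "kchain I \<alpha> 1 c" using a by blast
  have cyc0: "c {0} + c {1} + c {2} = 0" using fun_cong[OF conjunct2[OF a], of "{}"] by (simp only: kd)
  then have cyc: "c {2} = - c {0} - c {1}" by (simp add: algebra_simps eq_neg_iff_add_eq_0 add.assoc)
  note z = chz[OF ch]
  have iso0: "c {0} = 0" if "{0,1} \<notin> kbasis I \<alpha> 2" "{0,2} \<notin> kbasis I \<alpha> 2"
  proof (cases "{0} \<in> kbasis I \<alpha> 1")
    case True
    then have "{1} \<notin> kbasis I \<alpha> 1" "{2} \<notin> kbasis I \<alpha> 1" using H01 H02 that by blast+
    then have "c {1} = 0" "c {2} = 0" using kch0[OF ch] by blast+
    then show ?thesis using cyc0 by simp
  qed (use kch0[OF ch] in blast)
  have iso1: "c {1} = 0" if "{0,1} \<notin> kbasis I \<alpha> 2" "{1,2} \<notin> kbasis I \<alpha> 2"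
  proof (cases "{1} \<in> kbasis I \<alpha> 1")
    case True
    then have "{0} \<notin> kbasis I \<alpha> 1" "{2} \<notin> kbasis I \<alpha> 1" using H01 H12 that by blast+
    then have "c {0} = 0" "c {2} = 0" using kch0[OF ch] by blast+
    then show ?thesis using cyc0 by simp
  qed (use kch0[OF ch] in blast)
  have iso2: "c {2} = 0" if "{0,2} \<notin> kbasis I \<alpha> 2" "{1,2} \<notin> kbasis I \<alpha> 2"
  proof (cases "{2} \<in> kbasis I \<alpha> 1")
    case True
    then have "{0} \<notin> kbasis I \<alpha> 1" "{1} \<notin> kbasis I \<alpha> 1" using H02 H12 that by blast+
    then have "c {0} = 0" "c {1} = 0" using kch0[OF ch] by blast+
    then show ?thesis using cyc0 by simp
  qed (use kch0[OF ch] in blast)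
  define s where "s = (if {0,1} \<notin> kbasis I \<alpha> 2 then 0 else if {0,2} \<notin> kbasis I \<alpha> 2 then - c {0}
     else if {1,2} \<notin> kbasis I \<alpha> 2 then c {1} else 0)"
  define b :: "nat set \<Rightarrow> 'k" where "b = (\<lambda>F. if F = {0,1} then s else if F = {0,2} then - c {0} - s
     else if F = {1,2} then s - c {1} else 0)"
  have s1: "s = 0" if "{0,1} \<notin> kbasis I \<alpha> 2" using that s_def by simp
  have s2: "- c {0} - s = 0" if "{0,2} \<notin> kbasis I \<alpha> 2"
  proof (cases "{0,1} \<in> kbasis I \<alpha> 2")
    case True then show ?thesis using that s_def by simp
  next
    case False then show ?thesis using that s_def iso0 by simp
  qed
  have s3: "s - c {1} = 0" if "{1,2} \<notin> kbasis I \<alpha> 2"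
  proof (cases "{0,1} \<in> kbasis I \<alpha> 2")
    case False then show ?thesis using that s_def iso1 by simp
  next
    case True
    show ?thesis
    proof (cases "{0,2} \<in> kbasis I \<alpha> 2")
      case True then show ?thesis using \<open>{0,1} \<in> kbasis I \<alpha> 2\<close> that s_def by simp
    next
      case False
      then have "c {2} = 0" using iso2 that by blast
      then have "c {1} = - c {0}" using cyc by (simp add: eq_neg_iff_add_eq_0 algebra_simps)
      then show ?thesis using \<open>{0,1} \<in> kbasis I \<alpha> 2\<close> False s_def by simp
    qed
  qed
  have "kchain I \<alpha> 2 b" unfolding kchain_def
  proof (intro allI impI)
    fix F assume F: "F \<notin> kbasis I \<alpha> 2"
    show "b F = 0"
    proof (cases "F = {0,1}")
      case True then show ?thesis using F s1 b_def by simp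
    next
      case n1: False
      show ?thesis
      proof (cases "F = {0,2}")
        case True then show ?thesis using F s2 b_def n1 by simp
      next
        case n2: False
        show ?thesis
        proof (cases "F = {1,2}")
          case True then show ?thesis using F s3 b_def n1 n2 by simp
        next
          case False then show ?thesis using b_def n1 n2 by simp
        qed
      qed
    qed
  qed
  moreover have "kdiff b = c"
    apply (rule kdiff_eqI[where I=I and \<alpha>=\<alpha> and i=1])
    apply (simp_all only: kd b_def)
    apply (simp_all add: setneq z[simplified] ch)
    using cyc ch by (simp_all add: algebra_simps One_nat_def)
  ultimately show "\<exists>b. kchain I \<alpha> (Suc 1) b \<and> kdiff b = c" by (metis numeral_2_eq_2 One_nat_def)
qed


declare One_nat_def[simp del]

abbreviation mms where "mms \<equiv> mono_minus_set"

lemma mexp_simps[simp]: "mexp (a,b,c) 0 = a" "mexp (a,b,c) 1 = b" "mexp (a,b,c) 2 = c"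
  by simp_all

lemma mono3: "t \<in> {0,1,2::nat} \<longleftrightarrow> t = 0 \<or> t = 1 \<or> t = 2" by auto

lemma mdvd_iff: "mdvd x y \<longleftrightarrow> (\<forall>t\<in>{0,1,2}. mexp x t \<le> mexp y t)"
  by (cases x; cases y) auto

lemma mono_eq_iff: "x = y \<longleftrightarrow> (\<forall>t\<in>{0,1,2}. mexp x t = mexp y t)"
  by (cases x; cases y) auto

lemma mdeg_mexp: "mdeg x = mexp x 0 + mexp x 1 + mexp x 2"
  by (cases x) simp

lemma mexp_mms: "t \<in> {0,1,2} \<Longrightarrow> mexp (mms \<alpha> F) t = mexp \<alpha> t - (if t \<in> F then 1 else 0)"
  by (cases \<alpha>) (auto simp: mono_minus_set_def)

lemma mexp_mlcm: "t \<in> {0,1,2} \<Longrightarrow> mexp (mlcm x y) t = max (mexp x t) (mexp y t)"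
  by (cases x; cases y) auto

lemma mdvd_refl[simp]: "mdvd x x" by (simp add: mdvd_iff)
lemma mdvd_trans: "mdvd x y \<Longrightarrow> mdvd y z \<Longrightarrow> mdvd x z" unfolding mdvd_iff by (meson order_trans)
lemma mdvd_deg: "mdvd x y \<Longrightarrow> mdeg x \<le> mdeg y"
  by (cases x; cases y) auto
lemma mdvd_deg_eq: "mdvd x y \<Longrightarrow> mdeg x = mdeg y \<Longrightarrow> x = y"
  by (cases x; cases y) auto
lemma mdvd_lcm1: "mdvd x (mlcm x y)" by (cases x; cases y) auto
lemma mdvd_lcm2: "mdvd y (mlcm x y)" by (cases x; cases y) auto
lemma mdvd_lcm: "mdvd x z \<Longrightarrow> mdvd y z \<Longrightarrow> mdvd (mlcm x y) z"
  by (cases x; cases y; cases z) auto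

lemma mms_dvd: "mdvd (mms \<alpha> F) \<alpha>"
  by (cases \<alpha>) (auto simp: mono_minus_set_def)
lemma mms_anti: "G \<subseteq> F \<Longrightarrow> mdvd (mms \<alpha> F) (mms \<alpha> G)"
  by (cases \<alpha>) (auto simp: mono_minus_set_def)
lemma dvd_mms: "mdvd x \<alpha> \<Longrightarrow> (\<forall>t\<in>F. mexp x t < mexp \<alpha> t) \<Longrightarrow> mdvd x (mms \<alpha> F)"
  by (cases x; cases \<alpha>) (auto simp: mono_minus_set_def)

lemma ex_less: "mdvd x \<alpha> \<Longrightarrow> x \<noteq> \<alpha> \<Longrightarrow> \<exists>t\<in>{0,1,2}. mexp x t < mexp \<alpha> t"
  by (cases x; cases \<alpha>) auto

lemma ideal_up: "monomial_ideal I \<Longrightarrow> m \<in> I \<Longrightarrow> mdvd m m' \<Longrightarrow> m' \<in> I"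
  unfolding monomial_ideal_def by blast

lemma mingens_sub: "g \<in> mingens I \<Longrightarrow> g \<in> I" by (simp add: mingens_def)

lemma gen_exists:
  assumes "m \<in> I" shows "\<exists>g\<in>mingens I. mdvd g m"
proof -
  define S where "S = {g \<in> I. mdvd g m}"
  have "m \<in> S" using assms by (simp add: S_def)
  then obtain g where g: "g \<in> S" "\<And>h. h \<in> S \<Longrightarrow> mdeg g \<le> mdeg h"
    using ex_has_least_nat[of "\<lambda>g. g \<in> S" m mdeg] by blast
  have "g \<in> mingens I"
    unfolding mingens_def
  proof (intro CollectI conjI ballI impI)
    show "g \<in> I" using g(1) by (simp add: S_def)
    fix m' assume "m' \<in> I" "mdvd m' g"
    then have "m' \<in> S" using g(1) mdvd_trans by (auto simp: S_def)
    then have "mdeg g \<le> mdeg m'" using g(2) by blast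
    then show "m' = g" using \<open>mdvd m' g\<close> mdvd_deg mdvd_deg_eq by (simp add: le_antisym)
  qed
  then show ?thesis using g(1) by (auto simp: S_def)
qed

lemma deg_ge: "generated_in_degree I d \<Longrightarrow> m \<in> I \<Longrightarrow> d \<le> mdeg m"
  using gen_exists[of m I] mdvd_deg unfolding generated_in_degree_def by fastforce

lemma kb0: "{} \<in> kbasis I \<alpha> 0 \<longleftrightarrow> \<alpha> \<in> I"
proof -
  have "mms \<alpha> {} = \<alpha>" by (cases \<alpha>) (simp add: mono_minus_set_def)
  then show ?thesis by (simp add: kbasis_def)
qed

lemma kb1: "{j} \<in> kbasis I \<alpha> 1 \<longleftrightarrow> j \<in> {0,1,2} \<and> 1 \<le> mexp \<alpha> j \<and> mms \<alpha> {j} \<in> I"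
  by (simp add: kbasis_def)

lemma kb2: "j \<noteq> l \<Longrightarrow> {j,l} \<in> kbasis I \<alpha> 2 \<longleftrightarrow> j \<in> {0,1,2} \<and> l \<in> {0,1,2} \<and> 1 \<le> mexp \<alpha> j \<and> 1 \<le> mexp \<alpha> l \<and> mms \<alpha> {j,l} \<in> I"
  by (simp add: kbasis_def)

lemma kb3: "{0,1,2} \<in> kbasis I \<alpha> 3 \<longleftrightarrow> 1 \<le> mexp \<alpha> 0 \<and> 1 \<le> mexp \<alpha> 1 \<and> 1 \<le> mexp \<alpha> 2 \<and> mms \<alpha> {0,1,2} \<in> I"
  by (simp add: kbasis_def)

lemma deg_mms1: "t \<in> {0,1,2} \<Longrightarrow> 1 \<le> mexp \<alpha> t \<Longrightarrow> mdeg (mms \<alpha> {t}) + 1 = mdeg \<alpha>"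
  unfolding mono3 by (cases \<alpha>) (elim disjE; simp add: mono_minus_set_def)

lemma deg_mms2: "t \<in> {0,1,2} \<Longrightarrow> s \<in> {0,1,2} \<Longrightarrow> t \<noteq> s \<Longrightarrow> 1 \<le> mexp \<alpha> t \<Longrightarrow> 1 \<le> mexp \<alpha> s \<Longrightarrow> mdeg (mms \<alpha> {t,s}) + 2 = mdeg \<alpha>"
  unfolding mono3 by (cases \<alpha>) (elim disjE; simp add: mono_minus_set_def)


definition Vs :: "mono set \<Rightarrow> mono \<Rightarrow> mono set" where
  "Vs I \<alpha> = {h \<in> mingens I. mdvd h \<alpha>}"

definition Rel :: "mono set \<Rightarrow> mono \<Rightarrow> mono \<Rightarrow> mono \<Rightarrow> bool" where
  "Rel I \<alpha> = (\<lambda>x y. x \<in> Vs I \<alpha> \<and> y \<in> Vs I \<alpha> \<and> dual_edge x y)"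

definition Conn :: "mono set \<Rightarrow> mono \<Rightarrow> bool" where
  "Conn I \<alpha> \<longleftrightarrow> (\<forall>j\<in>{0,1,2}. \<forall>l\<in>{0,1,2}. j \<noteq> l \<longrightarrow> {j} \<in> kbasis I \<alpha> 1 \<longrightarrow> {l} \<in> kbasis I \<alpha> 1 \<longrightarrow>
      {j,l} \<in> kbasis I \<alpha> 2 \<or> (\<exists>m\<in>{0,1,2}. m \<noteq> j \<and> m \<noteq> l \<and> {j,m} \<in> kbasis I \<alpha> 2 \<and> {m,l} \<in> kbasis I \<alpha> 2))"

lemma Rel_lift: "mdvd \<alpha> \<beta> \<Longrightarrow> (Rel I \<alpha>)\<^sup>*\<^sup>* x y \<Longrightarrow> (Rel I \<beta>)\<^sup>*\<^sup>* x y"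
proof -
  assume ab: "mdvd \<alpha> \<beta>"
  have "Rel I \<alpha> u v \<Longrightarrow> Rel I \<beta> u v" for u v
    using ab mdvd_trans unfolding Rel_def Vs_def by blast
  then show "(Rel I \<alpha>)\<^sup>*\<^sup>* x y \<Longrightarrow> (Rel I \<beta>)\<^sup>*\<^sup>* x y"
    by (metis mono_rtranclp)
qed

lemma GI_conn_iff: "GI_connected I u v \<longleftrightarrow> (\<forall>a\<in>Vs I (mlcm u v). \<forall>b\<in>Vs I (mlcm u v). (Rel I (mlcm u v))\<^sup>*\<^sup>* a b)"
  unfolding GI_connected_def graph_connected_def dual_sub_vertices_def Vs_def Rel_def by simp

lemma gen_deg: "generated_in_degree I d \<Longrightarrow> g \<in> mingens I \<Longrightarrow> mdeg g = d"
  by (simp add: generated_in_degree_def)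

lemma mingens_min: "g \<in> mingens I \<Longrightarrow> h \<in> I \<Longrightarrow> mdvd h g \<Longrightarrow> h = g"
  by (simp add: mingens_def)

lemma conn_main:
  assumes mi: "monomial_ideal I" and gd: "generated_in_degree I d"
    and T1: "\<And>\<alpha>. mdeg \<alpha> \<ge> d + 2 \<Longrightarrow> Conn I \<alpha>"
  shows "u \<in> Vs I \<alpha> \<Longrightarrow> v \<in> Vs I \<alpha> \<Longrightarrow> (Rel I \<alpha>)\<^sup>*\<^sup>* u v"
proof (induction "mdeg \<alpha>" arbitrary: \<alpha> u v rule: less_induct)
  case less
  have u: "u \<in> mingens I" "mdvd u \<alpha>" and v: "v \<in> mingens I" "mdvd v \<alpha>"
    using less.prems unfolding Vs_def by blast+
  have du: "mdeg u = d" and dv: "mdeg v = d" using u v gd gen_deg by blast+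
  show ?case
  proof (cases "u = v")
    case True then show ?thesis by simp
  next
    case uv: False
    show ?thesis
    proof (cases "mdeg \<alpha> \<le> d + 1")
      case True
      have l1: "mdeg (mlcm u v) \<le> mdeg \<alpha>" using mdvd_lcm[OF u(2) v(2)] mdvd_deg by blast
      have "mlcm u v \<noteq> u"
      proof
        assume "mlcm u v = u"
        then have "mdvd v u" using mdvd_lcm2[of v u] by simp
        then show False using mingens_min[OF u(1) mingens_sub[OF v(1)]] uv by simp
      qed
      then have "mdeg (mlcm u v) \<noteq> mdeg u" using mdvd_deg_eq[OF mdvd_lcm1[of u v]] by auto
      then have "mdeg (mlcm u v) > d" using mdvd_deg[OF mdvd_lcm1[of u v]] du by simp
      then have "mdeg (mlcm u v) = d + 1" using l1 True by simp
      then have "dual_edge u v" using du dv by (simp add: dual_edge_def)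
      then have "Rel I \<alpha> u v" using less.prems by (simp add: Rel_def)
      then show ?thesis by blast
    next
      case False
      then have big: "mdeg \<alpha> \<ge> d + 2" by simp
      have step: "(Rel I \<alpha>)\<^sup>*\<^sup>* x y" if t: "t \<in> {0,1,2}" "1 \<le> mexp \<alpha> t" and x: "x \<in> mingens I" "mdvd x (mms \<alpha> {t})"
        and y: "y \<in> mingens I" "mdvd y (mms \<alpha> {t})" for t x y
      proof -
        have "mdeg (mms \<alpha> {t}) < mdeg \<alpha>" using deg_mms1[OF t] by simp
        moreover have "x \<in> Vs I (mms \<alpha> {t})" "y \<in> Vs I (mms \<alpha> {t})" using x y by (auto simp: Vs_def)
        ultimately have "(Rel I (mms \<alpha> {t}))\<^sup>*\<^sup>* x y" using less.hyps by blast
        then show ?thesis using Rel_lift[OF mms_dvd] by blast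
      qed
      have gen2: "\<exists>w\<in>mingens I. mdvd w (mms \<alpha> {t}) \<and> mdvd w (mms \<alpha> {s})" if "{t,s} \<in> kbasis I \<alpha> 2" for t s
      proof -
        have "mms \<alpha> {t,s} \<in> I" using that by (simp add: kbasis_def)
        then obtain w where w: "w \<in> mingens I" "mdvd w (mms \<alpha> {t,s})" using gen_exists by blast
        have "mdvd (mms \<alpha> {t,s}) (mms \<alpha> {t})" "mdvd (mms \<alpha> {t,s}) (mms \<alpha> {s})"
          using mms_anti[of "{t}" "{t,s}" \<alpha>] mms_anti[of "{s}" "{t,s}" \<alpha>] by simp_all
        then show ?thesis using w mdvd_trans by blast
      qed
      have "u \<noteq> \<alpha>" proof assume "u = \<alpha>" then show False using du big by simp qed
      then obtain j where j: "j \<in> {0,1,2}" "mexp u j < mexp \<alpha> j" using ex_less u(2) by blast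
      have "v \<noteq> \<alpha>" proof assume "v = \<alpha>" then show False using dv big by simp qed
      then obtain l where l: "l \<in> {0,1,2}" "mexp v l < mexp \<alpha> l" using ex_less v(2) by blast
      have uj: "mdvd u (mms \<alpha> {j})" using dvd_mms[OF u(2)] j by simp
      have vl: "mdvd v (mms \<alpha> {l})" using dvd_mms[OF v(2)] l by simp
      have j1: "1 \<le> mexp \<alpha> j" and l1: "1 \<le> mexp \<alpha> l" using j l by simp_all
      have "mms \<alpha> {j} \<in> I" using ideal_up[OF mi mingens_sub[OF u(1)] uj] .
      then have rj: "{j} \<in> kbasis I \<alpha> 1" using kb1 j(1) j1 by blast
      have "mms \<alpha> {l} \<in> I" using ideal_up[OF mi mingens_sub[OF v(1)] vl] .
      then have rl: "{l} \<in> kbasis I \<alpha> 1" using kb1 l(1) l1 by blast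
      show ?thesis
      proof (cases "j = l")
        case True then show ?thesis using step[OF j(1) j1 u(1) uj v(1)] vl by simp
      next
        case False
        have "{j,l} \<in> kbasis I \<alpha> 2 \<or> (\<exists>m\<in>{0,1,2}. m \<noteq> j \<and> m \<noteq> l \<and> {j,m} \<in> kbasis I \<alpha> 2 \<and> {m,l} \<in> kbasis I \<alpha> 2)"
          using T1[OF big, unfolded Conn_def, rule_format, OF j(1) l(1) False rj rl] .
        then show ?thesis
        proof
          assume "{j,l} \<in> kbasis I \<alpha> 2"
          then obtain w where w: "w \<in> mingens I" "mdvd w (mms \<alpha> {j})" "mdvd w (mms \<alpha> {l})" using gen2 by blast
          have "(Rel I \<alpha>)\<^sup>*\<^sup>* u w" using step[OF j(1) j1 u(1) uj w(1,2)] .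
          moreover have "(Rel I \<alpha>)\<^sup>*\<^sup>* w v" using step[OF l(1) l1 w(1,3) v(1) vl] .
          ultimately show ?thesis by (rule rtranclp_trans)
        next
          assume "\<exists>m\<in>{0,1,2}. m \<noteq> j \<and> m \<noteq> l \<and> {j,m} \<in> kbasis I \<alpha> 2 \<and> {m,l} \<in> kbasis I \<alpha> 2"
          then obtain m where m: "m \<in> {0,1,2}" "{j,m} \<in> kbasis I \<alpha> 2" "{m,l} \<in> kbasis I \<alpha> 2" by auto
          have m1: "1 \<le> mexp \<alpha> m" using m(2) by (simp add: kbasis_def)
          obtain w1 where w1: "w1 \<in> mingens I" "mdvd w1 (mms \<alpha> {j})" "mdvd w1 (mms \<alpha> {m})" using gen2[OF m(2)] by blast
          obtain w2 where w2: "w2 \<in> mingens I" "mdvd w2 (mms \<alpha> {m})" "mdvd w2 (mms \<alpha> {l})" using gen2[OF m(3)] by blast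
          have "(Rel I \<alpha>)\<^sup>*\<^sup>* u w1" using step[OF j(1) j1 u(1) uj w1(1,2)] .
          moreover have "(Rel I \<alpha>)\<^sup>*\<^sup>* w1 w2" using step[OF m(1) m1 w1(1,3) w2(1,2)] .
          moreover have "(Rel I \<alpha>)\<^sup>*\<^sup>* w2 v" using step[OF l(1) l1 w2(1,3) v(1) vl] .
          ultimately show ?thesis by (meson rtranclp_trans)
        qed
      qed
    qed
  qed
qed



declare One_nat_def[simp del]

lemma four_distinct: "(a::nat) \<in> {0,1,2} \<Longrightarrow> m \<in> {0,1,2} \<Longrightarrow> y \<in> {0,1,2} \<Longrightarrow> z \<in> {0,1,2} \<Longrightarrow>
  a \<noteq> m \<Longrightarrow> a \<noteq> y \<Longrightarrow> a \<noteq> z \<Longrightarrow> m \<noteq> y \<Longrightarrow> m \<noteq> z \<Longrightarrow> y \<noteq> z \<Longrightarrow> False"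
  unfolding mono3 by auto

lemma short3:
  assumes E: "\<And>x y. E x y \<Longrightarrow> x \<noteq> y \<and> x \<in> {0,1,2::nat} \<and> y \<in> {0,1,2}"
  shows "E\<^sup>*\<^sup>* a b \<Longrightarrow> a = b \<or> E a b \<or> (\<exists>m. E a m \<and> E m b)"
proof (induction rule: rtranclp_induct)
  case base then show ?case by simp
next
  case (step y z)
  from step.IH show ?case
  proof (elim disjE exE conjE)
    assume "a = y" then show ?thesis using step.hyps(2) by simp
  next
    assume "E a y" then show ?thesis using step.hyps(2) by blast
  next
    fix m assume am: "E a m" and my: "E m y"
    show ?thesis
    proof (cases "a = z \<or> m = z \<or> a = y")
      case True then show ?thesis using am step.hyps(2) by blast
    next
      case False
      then show ?thesis using four_distinct[of a m y z] E[OF am] E[OF my] E[OF step.hyps(2)] by blast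
    qed
  qed
qed

lemma bex3: "(\<exists>m\<in>{0,1,2::nat}. P m) \<longleftrightarrow> P 0 \<or> P 1 \<or> P 2" by auto
lemma c_comm: "{1,0} = {0,1::nat}" "{2,0} = {0,2::nat}" "{2,1} = {1,2::nat}" by auto

lemma Conn_H:
  assumes "Conn I \<alpha>"
  shows "{0} \<in> kbasis I \<alpha> 1 \<Longrightarrow> {1} \<in> kbasis I \<alpha> 1 \<Longrightarrow>
      {0,1} \<in> kbasis I \<alpha> 2 \<or> ({0,2} \<in> kbasis I \<alpha> 2 \<and> {1,2} \<in> kbasis I \<alpha> 2)"
    and "{0} \<in> kbasis I \<alpha> 1 \<Longrightarrow> {2} \<in> kbasis I \<alpha> 1 \<Longrightarrow>
      {0,2} \<in> kbasis I \<alpha> 2 \<or> ({0,1} \<in> kbasis I \<alpha> 2 \<and> {1,2} \<in> kbasis I \<alpha> 2)"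
    and "{1} \<in> kbasis I \<alpha> 1 \<Longrightarrow> {2} \<in> kbasis I \<alpha> 1 \<Longrightarrow>
      {1,2} \<in> kbasis I \<alpha> 2 \<or> ({0,1} \<in> kbasis I \<alpha> 2 \<and> {0,2} \<in> kbasis I \<alpha> 2)"
proof -
  note C = assms[unfolded Conn_def, rule_format]
  show "{0} \<in> kbasis I \<alpha> 1 \<Longrightarrow> {1} \<in> kbasis I \<alpha> 1 \<Longrightarrow>
      {0,1} \<in> kbasis I \<alpha> 2 \<or> ({0,2} \<in> kbasis I \<alpha> 2 \<and> {1,2} \<in> kbasis I \<alpha> 2)"
    using C[of 0 1] unfolding bex3 c_comm by simp
  show "{0} \<in> kbasis I \<alpha> 1 \<Longrightarrow> {2} \<in> kbasis I \<alpha> 1 \<Longrightarrow>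
      {0,2} \<in> kbasis I \<alpha> 2 \<or> ({0,1} \<in> kbasis I \<alpha> 2 \<and> {1,2} \<in> kbasis I \<alpha> 2)"
    using C[of 0 2] unfolding bex3 c_comm by simp
  show "{1} \<in> kbasis I \<alpha> 1 \<Longrightarrow> {2} \<in> kbasis I \<alpha> 1 \<Longrightarrow>
      {1,2} \<in> kbasis I \<alpha> 2 \<or> ({0,1} \<in> kbasis I \<alpha> 2 \<and> {0,2} \<in> kbasis I \<alpha> 2)"
    using C[of 1 2] unfolding bex3 c_comm by simp
qed

lemma Conn_of_tv1:
  assumes tv: "tor_vanishes (k::'k::field itself) I 1 \<alpha>"
  shows "Conn I \<alpha>"
  unfolding Conn_def
proof (intro ballI impI)
  fix j l assume j: "j \<in> {0,1,2::nat}" and l: "l \<in> {0,1,2::nat}" and jl: "j \<noteq> l"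
    and rj: "{j} \<in> kbasis I \<alpha> 1" and rl: "{l} \<in> kbasis I \<alpha> 1"
  show "{j,l} \<in> kbasis I \<alpha> 2 \<or> (\<exists>m\<in>{0,1,2}. m \<noteq> j \<and> m \<noteq> l \<and> {j,m} \<in> kbasis I \<alpha> 2 \<and> {m,l} \<in> kbasis I \<alpha> 2)"
    unfolding bex3
  proof (rule ccontr)
    assume n: "\<not> ({j,l} \<in> kbasis I \<alpha> 2 \<or> ((0 \<noteq> j \<and> 0 \<noteq> l \<and> {j,0} \<in> kbasis I \<alpha> 2 \<and> {0,l} \<in> kbasis I \<alpha> 2) \<or>
       (1 \<noteq> j \<and> 1 \<noteq> l \<and> {j,1} \<in> kbasis I \<alpha> 2 \<and> {1,l} \<in> kbasis I \<alpha> 2) \<or>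
       (2 \<noteq> j \<and> 2 \<noteq> l \<and> {j,2} \<in> kbasis I \<alpha> 2 \<and> {2,l} \<in> kbasis I \<alpha> 2)))"
    from j l jl show False unfolding mono3
    proof (elim disjE)
      assume "j = 0" "l = 1" then show False using tv1n_01[OF tv] rj rl n by (simp add: c_comm)
    next
      assume "j = 0" "l = 2" then show False using tv1n_02[OF tv] rj rl n by (simp add: c_comm)
    next
      assume "j = 1" "l = 0" then show False using tv1n_10[OF tv] rj rl n by (simp add: c_comm)
    next
      assume "j = 1" "l = 2" then show False using tv1n_12[OF tv] rj rl n by (simp add: c_comm)
    next
      assume "j = 2" "l = 0" then show False using tv1n_20[OF tv] rj rl n by (simp add: c_comm)
    next
      assume "j = 2" "l = 1" then show False using tv1n_21[OF tv] rj rl n by (simp add: c_comm)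
    qed simp_all
  qed
qed



declare One_nat_def[simp del]

lemma mexp_lt_dvd: "t \<in> {0,1,2} \<Longrightarrow> mdvd x (mms \<alpha> {t}) \<Longrightarrow> 1 \<le> mexp \<alpha> t \<Longrightarrow> mexp x t < mexp \<alpha> t"
  using mexp_mms[of t \<alpha> "{t}"] unfolding mdvd_iff by fastforce

lemma conn_to_Conn:
  assumes mi: "monomial_ideal I" and gd: "generated_in_degree I d"
    and AC: "\<forall>u\<in>mingens I. \<forall>v\<in>mingens I. GI_connected I u v"
    and big: "mdeg \<alpha> \<ge> d + 2"
  shows "Conn I \<alpha>"
  unfolding Conn_def
proof (intro ballI impI)
  fix j l assume j: "j \<in> {0,1,2::nat}" and l: "l \<in> {0,1,2::nat}" and jl: "j \<noteq> l"
    and rj: "{j} \<in> kbasis I \<alpha> 1" and rl: "{l} \<in> kbasis I \<alpha> 1"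
  define E where "E = (\<lambda>t s. t \<in> {0,1,2::nat} \<and> s \<in> {0,1,2} \<and> t \<noteq> s \<and> {t,s} \<in> kbasis I \<alpha> 2)"
  define S where "S = (\<lambda>x t. t \<in> {0,1,2::nat} \<and> mexp x t < mexp \<alpha> t)"
  have j1: "1 \<le> mexp \<alpha> j" "mms \<alpha> {j} \<in> I" using rj kb1 by blast+
  have l1: "1 \<le> mexp \<alpha> l" "mms \<alpha> {l} \<in> I" using rl kb1 by blast+
  obtain u where u: "u \<in> mingens I" "mdvd u (mms \<alpha> {j})" using gen_exists[OF j1(2)] by blast
  obtain v where v: "v \<in> mingens I" "mdvd v (mms \<alpha> {l})" using gen_exists[OF l1(2)] by blast
  have ua: "mdvd u \<alpha>" using u(2) mms_dvd mdvd_trans by blast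
  have va: "mdvd v \<alpha>" using v(2) mms_dvd mdvd_trans by blast
  have Sj: "S u j" unfolding S_def using j mexp_lt_dvd[OF j u(2) j1(1)] by blast
  have Sl: "S v l" unfolding S_def using l mexp_lt_dvd[OF l v(2) l1(1)] by blast
  have keyE: "E t s" if "S x t" "S x s" "t \<noteq> s" "x \<in> I" "mdvd x \<alpha>" for x t s
  proof -
    have "mdvd x (mms \<alpha> {t,s})" using dvd_mms[OF that(5), of "{t,s}"] that(1,2) unfolding S_def by blast
    then have "mms \<alpha> {t,s} \<in> I" using ideal_up[OF mi that(4)] by blast
    moreover have "1 \<le> mexp \<alpha> t" "1 \<le> mexp \<alpha> s" using that(1,2) unfolding S_def by auto
    ultimately have "{t,s} \<in> kbasis I \<alpha> 2" using kb2[OF that(3)] that(1,2) unfolding S_def by blast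
    then show ?thesis unfolding E_def using that(1-3) unfolding S_def by blast
  qed
  define \<beta> where "\<beta> = mlcm u v"
  have ba: "mdvd \<beta> \<alpha>" unfolding \<beta>_def using mdvd_lcm[OF ua va] .
  have claim: "\<exists>t. S x t \<and> E\<^sup>*\<^sup>* j t" if "(Rel I \<beta>)\<^sup>*\<^sup>* u x" for x
    using that
  proof (induction rule: rtranclp_induct)
    case base then show ?case using Sj by blast
  next
    case (step x y)
    from step.IH obtain t where t: "S x t" "E\<^sup>*\<^sup>* j t" by blast
    have xy: "x \<in> mingens I" "mdvd x \<beta>" "y \<in> mingens I" "mdvd y \<beta>" "dual_edge x y"
      using step.hyps(2) unfolding Rel_def Vs_def by blast+
    have xa: "mdvd x \<alpha>" "mdvd y \<alpha>" using xy ba mdvd_trans by blast+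
    have dx: "mdeg x = d" using gd gen_deg xy(1) by blast
    have "mdeg (mlcm x y) = d + 1" using xy(5) dx unfolding dual_edge_def by simp
    have "mlcm x y \<noteq> \<alpha>" proof assume "mlcm x y = \<alpha>" with big \<open>mdeg (mlcm x y) = d + 1\<close> show False by simp qed
    then obtain s where s: "s \<in> {0,1,2}" "mexp (mlcm x y) s < mexp \<alpha> s"
      using ex_less[OF mdvd_lcm[OF xa]] by blast
    have Sxs: "S x s" and Sys: "S y s" using s mexp_mlcm[OF s(1), of x y] unfolding S_def by auto
    have "E\<^sup>*\<^sup>* j s"
    proof (cases "s = t")
      case True then show ?thesis using t by simp
    next
      case False
      then have "E t s" using keyE[OF t(1) Sxs] mingens_sub[OF xy(1)] xa(1) by blast
      then show ?thesis using t(2) by (rule rtranclp.rtrancl_into_rtrancl[rotated])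
    qed
    then show ?case using Sys by blast
  qed
  have "u \<in> Vs I \<beta>" "v \<in> Vs I \<beta>" unfolding Vs_def \<beta>_def using u(1) v(1) mdvd_lcm1 mdvd_lcm2 by blast+
  then have "(Rel I \<beta>)\<^sup>*\<^sup>* u v" using AC u(1) v(1) unfolding GI_conn_iff \<beta>_def by blast
  then obtain t where t: "S v t" "E\<^sup>*\<^sup>* j t" using claim by blast
  have "E\<^sup>*\<^sup>* j l"
  proof (cases "t = l")
    case True then show ?thesis using t by simp
  next
    case False
    then have "E t l" using keyE[OF t(1) Sl] mingens_sub[OF v(1)] va by blast
    then show ?thesis using t(2) by (rule rtranclp.rtrancl_into_rtrancl[rotated])
  qed
  moreover have Ep: "\<And>x y. E x y \<Longrightarrow> x \<noteq> y \<and> x \<in> {0,1,2::nat} \<and> y \<in> {0,1,2}" unfolding E_def by blast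
  ultimately have "j = l \<or> E j l \<or> (\<exists>m. E j m \<and> E m l)" using short3[of E, OF Ep] by blast
  then show "{j,l} \<in> kbasis I \<alpha> 2 \<or> (\<exists>m\<in>{0,1,2}. m \<noteq> j \<and> m \<noteq> l \<and> {j,m} \<in> kbasis I \<alpha> 2 \<and> {m,l} \<in> kbasis I \<alpha> 2)"
  proof (elim disjE exE conjE)
    assume "j = l" then show ?thesis using jl by simp
  next
    assume "E j l" then show ?thesis unfolding E_def by blast
  next
    fix m assume a: "E j m" "E m l"
    have "m \<in> {0,1,2}" "m \<noteq> j" "m \<noteq> l" "{j,m} \<in> kbasis I \<alpha> 2" "{m,l} \<in> kbasis I \<alpha> 2"
      using a unfolding E_def by auto
    then show ?thesis by blast
  qed
qed


lemma tv_high: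
  assumes "i \<ge> 3"
  shows "tor_vanishes (k::'k::field itself) I i \<alpha>"
  unfolding tor_vanishes_def
proof (intro allI impI)
  fix c :: "nat set \<Rightarrow> 'k"
  assume a: "kchain I \<alpha> i c \<and> kdiff c = (\<lambda>_. 0)"
  have c012: "c {0,1,2} = 0" using fun_cong[OF conjunct2[OF a], of "{0,1}"] by (simp only: kd)
  have "c = (\<lambda>_. 0)"
  proof
    fix F
    show "c F = 0"
    proof (cases "F \<subseteq> {0,1,2} \<and> card F = i")
      case True
      then have "F = {0,1,2}" using t2[of F] assms by simp
      then show ?thesis using c012 by simp
    next
      case False
      then show ?thesis using a kch0' by blast
    qed
  qed
  then show "\<exists>b. kchain I \<alpha> (Suc i) b \<and> kdiff b = c"
    by (intro exI[of _ "\<lambda>_. 0"]) (simp add: kchain_def kdiff_zero)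
qed

lemma ex_div: "d \<le> mdeg f \<Longrightarrow> \<exists>m. mdeg m = d \<and> mdvd m f"
proof -
  assume a: "d \<le> mdeg f"
  obtain x y z where f: "f = (x,y,z)" by (cases f)
  show ?thesis
  proof (cases "d \<le> x")
    case True then show ?thesis using f by (intro exI[of _ "(d,0,0)"]) simp
  next
    case False
    show ?thesis
    proof (cases "d \<le> x + y")
      case True then show ?thesis using f False by (intro exI[of _ "(x,d-x,0)"]) simp
    next
      case False2: False
      then show ?thesis using f False a by (intro exI[of _ "(x,y,d-x-y)"]) simp
    qed
  qed
qed

lemma shadow_gen: "monomial_ideal I \<Longrightarrow> generated_in_degree I d \<Longrightarrow> m \<in> I \<Longrightarrow> shadow d m \<inter> mingens I \<noteq> {}"
  using gen_exists[of m I] unfolding shadow_def generated_in_degree_def by blast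

lemma gen_in_shadow: "shadow d m \<inter> mingens I \<noteq> {} \<Longrightarrow> monomial_ideal I \<Longrightarrow> m \<in> I"
  unfolding shadow_def using ideal_up mingens_sub by blast

lemma no_bad_of_LR:
  assumes mi: "monomial_ideal I" and gd: "generated_in_degree I d"
    and LR: "has_linear_resolution (k::'k::field itself) I d"
  shows "\<not> bad_configuration I d"
proof
  assume "bad_configuration I d"
  then obtain M f where M: "M \<noteq> {}" "\<forall>m\<in>M. mdeg m = d \<and> m \<notin> I" "M = shadow d f"
    and sx: "shadow d (mx f) \<inter> mingens I \<noteq> {}" and sy: "shadow d (my f) \<inter> mingens I \<noteq> {}"
    and sz: "shadow d (mz f) \<inter> mingens I \<noteq> {}"
    unfolding bad_configuration_def by blast
  obtain a b c where f: "f = (a,b,c)" by (cases f)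
  obtain m0 where "m0 \<in> M" using M(1) by blast
  then have "m0 \<in> shadow d f" using M(3) by simp
  then have "mdeg m0 = d" "mdvd m0 f" unfolding shadow_def by simp_all
  then have df: "d \<le> mdeg f" using mdvd_deg by fastforce
  have fI: "f \<notin> I"
  proof
    assume "f \<in> I"
    then obtain g where g: "g \<in> mingens I" "mdvd g f" using gen_exists by blast
    then have "mdeg g = d" using gd gen_deg by blast
    then have "g \<in> M" using g M(3) unfolding shadow_def by simp
    then show False using M(2) mingens_sub[OF g(1)] by blast
  qed
  have I3: "mx f \<in> I" "my f \<in> I" "mz f \<in> I" using gen_in_shadow[OF sx mi] gen_in_shadow[OF sy mi] gen_in_shadow[OF sz mi] .
  define \<alpha> where "\<alpha> = (a+1, b+1, c+1)"
  have m01: "mms \<alpha> {0,1} = mz f" and m02: "mms \<alpha> {0,2} = my f" and m12: "mms \<alpha> {1,2} = mx f"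
    and m012: "mms \<alpha> {0,1,2} = f"
    unfolding \<alpha>_def f mono_minus_set_def mx_def my_def mz_def by simp_all
  have q: "{0,1} \<in> kbasis I \<alpha> 2" "{0,2} \<in> kbasis I \<alpha> 2" "{1,2} \<in> kbasis I \<alpha> 2"
    using I3 kb2[of 0 1 I \<alpha>] kb2[of 0 2 I \<alpha>] kb2[of 1 2 I \<alpha>] m01 m02 m12 unfolding \<alpha>_def by simp_all
  have n3: "{0,1,2} \<notin> kbasis I \<alpha> 3" using fI m012 kb3 by blast
  have e: "mdeg \<alpha> = 2 + (mdeg f + 1)" unfolding \<alpha>_def f by simp
  have ne: "mdeg f + 1 \<noteq> d" using df by simp
  have "betti_zero k I 2 (2 + (mdeg f + 1))" using LR[unfolded has_linear_resolution_def, rule_format, OF ne] .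
  then have "tor_vanishes k I 2 \<alpha>" unfolding betti_zero_def using e by blast
  then show False using tv2n[OF _ q] n3 by blast
qed

lemma tv2cond:
  assumes mi: "monomial_ideal I" and gd: "generated_in_degree I d"
    and nb: "\<not> bad_configuration I d" and deg: "mdeg \<alpha> \<noteq> d + 2"
    and q: "{0,1} \<in> kbasis I \<alpha> 2" "{0,2} \<in> kbasis I \<alpha> 2" "{1,2} \<in> kbasis I \<alpha> 2"
  shows "{0,1,2} \<in> kbasis I \<alpha> 3"
proof -
  obtain a b c where al: "\<alpha> = (a,b,c)" by (cases \<alpha>)
  have q': "1 \<le> mexp \<alpha> 0 \<and> 1 \<le> mexp \<alpha> 1 \<and> mms \<alpha> {0,1} \<in> I"
       "1 \<le> mexp \<alpha> 0 \<and> 1 \<le> mexp \<alpha> 2 \<and> mms \<alpha> {0,2} \<in> I"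
       "1 \<le> mexp \<alpha> 1 \<and> 1 \<le> mexp \<alpha> 2 \<and> mms \<alpha> {1,2} \<in> I"
    using q kb2[of 0 1 I \<alpha>] kb2[of 0 2 I \<alpha>] kb2[of 1 2 I \<alpha>] by simp_all
  have abc: "1 \<le> a" "1 \<le> b" "1 \<le> c" using q' al by simp_all
  define f where "f = (a-1, b-1, c-1)"
  have m01: "mms \<alpha> {0,1} = mz f" and m02: "mms \<alpha> {0,2} = my f" and m12: "mms \<alpha> {1,2} = mx f"
    and m012: "mms \<alpha> {0,1,2} = f"
    unfolding al f_def mono_minus_set_def mx_def my_def mz_def using abc by simp_all
  have "d \<le> mdeg (mms \<alpha> {0,1})" using deg_ge[OF gd] q' by blast
  then have "d + 2 \<le> a + b + c" using abc unfolding m01 f_def mz_def by simp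
  then have "d + 3 \<le> a + b + c" using deg al by simp
  then have df: "d \<le> mdeg f" using abc unfolding f_def by simp
  show ?thesis
  proof (cases "f \<in> I")
    case True then show ?thesis using kb3 q' m012 by blast
  next
    case False
    have "bad_configuration I d"
      unfolding bad_configuration_def
    proof (intro exI conjI)
      show "shadow d f \<noteq> {}" using ex_div[OF df] unfolding shadow_def by blast
      show "\<forall>m\<in>shadow d f. mdeg m = d \<and> m \<notin> I"
        using False ideal_up[OF mi] unfolding shadow_def by blast
      show "shadow d f = shadow d f" ..
      show "shadow d (mx f) \<inter> mingens I \<noteq> {}" using shadow_gen[OF mi gd] q' m12 by metis
      show "shadow d (my f) \<inter> mingens I \<noteq> {}" using shadow_gen[OF mi gd] q' m02 by metis
      show "shadow d (mz f) \<inter> mingens I \<noteq> {}" using shadow_gen[OF mi gd] q' m01 by metis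
    qed
    then show ?thesis using nb by blast
  qed
qed

lemma tv0cond:
  assumes mi: "monomial_ideal I" and gd: "generated_in_degree I d" and deg: "mdeg \<alpha> \<noteq> d"
    and e: "{} \<in> kbasis I \<alpha> 0"
  shows "\<exists>j. {j} \<in> kbasis I \<alpha> 1"
proof -
  have "\<alpha> \<in> I" using e kb0 by blast
  then obtain g where g: "g \<in> mingens I" "mdvd g \<alpha>" using gen_exists by blast
  have "g \<noteq> \<alpha>" using gen_deg[OF gd g(1)] deg by auto
  then obtain t where t: "t \<in> {0,1,2}" "mexp g t < mexp \<alpha> t" using ex_less g(2) by blast
  have "mdvd g (mms \<alpha> {t})" using dvd_mms[OF g(2)] t by simp
  then have "mms \<alpha> {t} \<in> I" using ideal_up[OF mi mingens_sub[OF g(1)]] by blast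
  moreover have "1 \<le> mexp \<alpha> t" using t by simp
  ultimately show ?thesis using kb1 t(1) by blast
qed

lemma tv1cond:
  assumes mi: "monomial_ideal I" and gd: "generated_in_degree I d"
    and AC: "\<forall>u\<in>mingens I. \<forall>v\<in>mingens I. GI_connected I u v"
    and deg: "mdeg \<alpha> \<noteq> d + 1"
  shows "Conn I \<alpha>"
proof (cases "mdeg \<alpha> \<ge> d + 2")
  case True then show ?thesis using conn_to_Conn[OF mi gd AC] by blast
next
  case False
  have "{j} \<notin> kbasis I \<alpha> 1" for j
  proof
    assume "{j} \<in> kbasis I \<alpha> 1"
    then have "j \<in> {0,1,2}" "1 \<le> mexp \<alpha> j" "mms \<alpha> {j} \<in> I" using kb1 by blast+
    then have "d \<le> mdeg (mms \<alpha> {j})" "mdeg (mms \<alpha> {j}) + 1 = mdeg \<alpha>" using deg_ge[OF gd] deg_mms1 by blast+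
    then show False using False deg by simp
  qed
  then show ?thesis unfolding Conn_def by blast
qed

theorem mainTheorem4:
  fixes k :: "'k::field itself" and I :: "mono set" and d :: nat
  assumes "monomial_ideal I"
    and "generated_in_degree I d"
  shows "has_linear_resolution k I d \<longleftrightarrow>
           ((\<forall>u\<in>mingens I. \<forall>v\<in>mingens I. GI_connected I u v) \<and> \<not> bad_configuration I d)"
proof
  assume LR: "has_linear_resolution k I d"
  have T1: "Conn I \<alpha>" if "mdeg \<alpha> \<ge> d + 2" for \<alpha>
  proof -
    have e: "mdeg \<alpha> = 1 + (mdeg \<alpha> - 1)" and ne: "mdeg \<alpha> - 1 \<noteq> d" using that by simp_all
    have "betti_zero k I 1 (1 + (mdeg \<alpha> - 1))" using LR[unfolded has_linear_resolution_def, rule_format, OF ne] .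
    then have "tor_vanishes k I 1 \<alpha>" unfolding betti_zero_def using e by metis
    then show ?thesis by (rule Conn_of_tv1)
  qed
  have "GI_connected I u v" if "u \<in> mingens I" "v \<in> mingens I" for u v
    unfolding GI_conn_iff
  proof (intro ballI)
    fix a b assume "a \<in> Vs I (mlcm u v)" "b \<in> Vs I (mlcm u v)"
    then show "(Rel I (mlcm u v))\<^sup>*\<^sup>* a b" using conn_main[OF assms T1] by blast
  qed
  then show "(\<forall>u\<in>mingens I. \<forall>v\<in>mingens I. GI_connected I u v) \<and> \<not> bad_configuration I d"
    using no_bad_of_LR[OF assms LR] by blast
next
  assume "(\<forall>u\<in>mingens I. \<forall>v\<in>mingens I. GI_connected I u v) \<and> \<not> bad_configuration I d"
  then have AC: "\<forall>u\<in>mingens I. \<forall>v\<in>mingens I. GI_connected I u v" and nb: "\<not> bad_configuration I d" by blast+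
  show "has_linear_resolution k I d"
    unfolding has_linear_resolution_def betti_zero_def
  proof (intro allI impI)
    fix i j \<alpha> assume jd: "j \<noteq> d" and dg: "mdeg \<alpha> = i + j"
    consider "i = 0" | "i = 1" | "i = 2" | "i \<ge> 3" by linarith
    then show "tor_vanishes k I i \<alpha>"
    proof cases
      case 1
      have dd: "mdeg \<alpha> \<noteq> d" using jd dg 1 by simp
      have "tor_vanishes k I 0 \<alpha>" by (rule tv0) (rule tv0cond[OF assms dd])
      then show ?thesis using 1 by simp
    next
      case 2
      have C: "Conn I \<alpha>" using tv1cond[OF assms AC] jd dg 2 by simp
      have "tor_vanishes k I 1 \<alpha>" using Conn_H(1)[OF C] Conn_H(2)[OF C] Conn_H(3)[OF C] by (rule tv1s)
      then show ?thesis using 2 by simp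
    next
      case 3
      have dd: "mdeg \<alpha> \<noteq> d + 2" using jd dg 3 by simp
      have "tor_vanishes k I 2 \<alpha>" using tv2cond[OF assms nb dd] by (rule tv2s)
      then show ?thesis using 3 by simp
    next
      case 4
      then show ?thesis by (rule tv_high)
    qed
  qed
qed


end
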